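(* Let $(N_1(t))_{t\ge 0}$ be a standard (homogeneous) Poisson process with rate $1$, let $\lambda:[0,\infty)\to(0,\infty)$ be locally integrable, and set $\Lambda(s,t)=\int_s^t\lambda(\tau)\,d\tau$, $\Lambda(t)=\Lambda(0,t)$, with $\Lambda(t)\to\infty$ as $t\to\infty$. Let $\alpha\in(0,1)$, let $(L_\alpha(t))_{t\ge0}$ be an $\alpha$-stable subordinator, i.e. a Lévy process with $\mathbb{E}[e^{-uL_\alpha(t)}]=e^{-tu^\alpha}$, and let $Y_\alpha(t)=\inf\{u\ge0: L_\alpha(u)>t\}$ be its inverse, assumed independent of $N_1$. Define the fractional non-homogeneous Poisson process $N_\alpha(t)=N_1(\Lambda(Y_\alpha(t)))$. Let $\mathcal{F}_0=\sigma(\{Y_\alpha(t),t\ge0\})$, $\mathcal{F}^{N_\alpha}_t=\sigma(\{N_\alpha(s):s\le t\})$ and $\mathcal{F}_t=\mathcal{F}_0\vee\mathcal{F}^{N_\alpha}_t$. Then $(N_\alpha(t))_{t\ge0}$ is an $(\mathcal{F}_t)$-Cox process directed by $(\Lambda(Y_\alpha(t)))_{t\ge0}$; in particular, for all $0\le s\le t$ and $u\in\mathbb{R}$, $$\mathbb{E}\big[e^{iu(N_\alpha(t)-N_\alpha(s))}\,\big|\,\mathcal{F}_s\big]=\exp\big[(\Lambda(Y_\alpha(t))-\Lambda(Y_\alpha(s)))(e^{iu}-1)\big]\quad\text{a.s.},$$ so that, conditionally on $\mathcal{F}_s$, $N_\alpha(t)-N_\alpha(s)$ is Poisson distributed with parameter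 $\Lambda(Y_\alpha(t))-\Lambda(Y_\alpha(s))$.
   Context: A point process $(N(t))_{t\ge0}$ adapted to a filtration $(\mathcal{F}^N_t)$ is called an $(\mathcal{F}_t)$-Cox process directed by a right-continuous increasing process $(A(t))_{t\ge0}$ if, with $\mathcal{F}_0=\sigma(A(t),t\ge0)$ and $\mathcal{F}_t=\mathcal{F}_0\vee\mathcal{F}^N_t$, conditionally on $(\mathcal{F}_t)$ the process $N$ is a Poisson process with intensity measure $dA(t)$ (i.e. it has conditionally independent increments with $N(t)-N(s)$ conditionally Poisson with parameter $A(t)-A(s)$). *)

theory Defs
  imports "HOL-Probability.Probability"
begin

definition indep_increments ::
  "'a measure \<Rightarrow> (real \<Rightarrow> 'a \<Rightarrow> real) \<Rightarrow> bool" where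
  "indep_increments M X \<longleftrightarrow>
     (\<forall>(ts :: nat \<Rightarrow> real) (n :: nat). 0 \<le> ts 0 \<longrightarrow> (\<forall>i<n. ts i \<le> ts (Suc i)) \<longrightarrow>
        prob_space.indep_vars M (\<lambda>_. borel) (\<lambda>i \<omega>. X (ts (Suc i)) \<omega> - X (ts i) \<omega>) {..<n})"

definition std_poisson_process :: "'a measure \<Rightarrow> (real \<Rightarrow> 'a \<Rightarrow> nat) \<Rightarrow> bool" where
  "std_poisson_process M N \<longleftrightarrow>
     prob_space M \<and>
     (\<forall>t. N t \<in> measurable M (count_space UNIV)) \<and>
     (\<forall>\<omega>\<in>space M. N 0 \<omega> = 0) \<and>
     (\<forall>\<omega>\<in>space M. \<forall>s t. 0 \<le> s \<longrightarrow> s \<le> t \<longrightarrow> N s \<omega> \<le> N t \<omega>) \<and>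
     (\<forall>\<omega>\<in>space M. \<forall>t\<ge>0. continuous (at_right t) (\<lambda>s. real (N s \<omega>))) \<and>
     indep_increments M (\<lambda>t \<omega>. real (N t \<omega>)) \<and>
     (\<forall>s t (k::nat). 0 \<le> s \<longrightarrow> s \<le> t \<longrightarrow>
        measure M {\<omega>\<in>space M. N t \<omega> - N s \<omega> = k} = (t - s) ^ k / fact k * exp (-(t - s)))"

definition levy_process :: "'a measure \<Rightarrow> (real \<Rightarrow> 'a \<Rightarrow> real) \<Rightarrow> bool" where
  "levy_process M X \<longleftrightarrow>
     prob_space M \<and>
     (\<forall>t. X t \<in> borel_measurable M) \<and>
     (\<forall>\<omega>\<in>space M. X 0 \<omega> = 0) \<and>
     (\<forall>\<omega>\<in>space M. \<forall>t\<ge>0. continuous (at_right t) (\<lambda>s. X s \<omega>)) \<and>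
     (\<forall>\<omega>\<in>space M. \<forall>t>0. \<exists>l. ((\<lambda>s. X s \<omega>) \<longlongrightarrow> l) (at_left t)) \<and>
     indep_increments M X \<and>
     (\<forall>s t. 0 \<le> s \<longrightarrow> s \<le> t \<longrightarrow>
        distr M borel (\<lambda>\<omega>. X t \<omega> - X s \<omega>) = distr M borel (X (t - s)))"

definition stable_subordinator :: "real \<Rightarrow> 'a measure \<Rightarrow> (real \<Rightarrow> 'a \<Rightarrow> real) \<Rightarrow> bool" where
  "stable_subordinator \<alpha> M L \<longleftrightarrow>
     levy_process M L \<and>
     (\<forall>\<omega>\<in>space M. \<forall>s t. 0 \<le> s \<longrightarrow> s \<le> t \<longrightarrow> L s \<omega> \<le> L t \<omega>) \<and>
     (\<forall>t u. 0 \<le> t \<longrightarrow> 0 \<le> u \<longrightarrow>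
        prob_space.expectation M (\<lambda>\<omega>. exp (- u * L t \<omega>)) = exp (- t * u powr \<alpha>))"

definition inverse_subordinator :: "(real \<Rightarrow> 'a \<Rightarrow> real) \<Rightarrow> real \<Rightarrow> 'a \<Rightarrow> real" where
  "inverse_subordinator L t \<omega> = Inf {u. 0 \<le> u \<and> t < L u \<omega>}"

definition cum_intensity :: "(real \<Rightarrow> real) \<Rightarrow> real \<Rightarrow> real" where
  "cum_intensity lam t = (LINT \<tau>:{0..t}|lborel. lam \<tau>)"

definition gen_sigma ::
  "'a measure \<Rightarrow> 'i set \<Rightarrow> ('i \<Rightarrow> 'a \<Rightarrow> 'b) \<Rightarrow> 'b measure \<Rightarrow> 'a measure" where
  "gen_sigma M I X N = sigma (space M) {X i -` B \<inter> space M | i B. i \<in> I \<and> B \<in> sets N}"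

text \<open>(F_t)-Cox process directed by A: N is adapted, A is F_0 measurable, and
  conditionally on F_s the increment N(t) - N(s) is Poisson with parameter A(t) - A(s)
  (this yields conditionally independent Poisson increments given F_0).\<close>
definition cox_process ::
  "'a measure \<Rightarrow> (real \<Rightarrow> 'a measure) \<Rightarrow> (real \<Rightarrow> 'a \<Rightarrow> nat) \<Rightarrow> (real \<Rightarrow> 'a \<Rightarrow> real) \<Rightarrow> bool" where
  "cox_process M F N A \<longleftrightarrow>
     (\<forall>t\<ge>0. subalgebra M (F t)) \<and>
     (\<forall>s t. 0 \<le> s \<longrightarrow> s \<le> t \<longrightarrow> sets (F s) \<subseteq> sets (F t)) \<and>
     (\<forall>t\<ge>0. N t \<in> measurable (F t) (count_space UNIV)) \<and>
     (\<forall>t\<ge>0. A t \<in> borel_measurable (F 0)) \<and>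
     (AE \<omega> in M. \<forall>s t. 0 \<le> s \<longrightarrow> s \<le> t \<longrightarrow> A s \<omega> \<le> A t \<omega>) \<and>
     (AE \<omega> in M. \<forall>t\<ge>0. continuous (at_right t) (\<lambda>s. A s \<omega>)) \<and>
     (\<forall>s t (k::nat). 0 \<le> s \<longrightarrow> s \<le> t \<longrightarrow>
        (AE \<omega> in M. real_cond_exp M (F s)
              (indicator {\<omega>. int (N t \<omega>) - int (N s \<omega>) = int k}) \<omega>
            = (A t \<omega> - A s \<omega>) ^ k / fact k * exp (-(A t \<omega> - A s \<omega>))))"

end

theory Submission
  imports Defs
begin


lemma si_helper: "integrable M f \<Longrightarrow> A \<in> sets M \<Longrightarrow> set_integrable M A (f::_\<Rightarrow>real)"
  unfolding set_integrable_def by (rule integrable_mult_indicator)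

lemma cond_exp_pi:
  fixes f g :: "'a \<Rightarrow> real"
  assumes PS: "prob_space M" and sub: "subalgebra M F" and IS: "Int_stable P" and PM: "P \<subseteq> sets M"
    and sp: "space M \<in> P" and gen: "sets F \<subseteq> sigma_sets (space M) P"
    and [measurable]: "integrable M f" "integrable M g" "g \<in> borel_measurable F"
    and eq: "\<And>A. A \<in> P \<Longrightarrow> (\<integral>x\<in>A. f x \<partial>M) = (\<integral>x\<in>A. g x \<partial>M)"
  shows "AE x in M. real_cond_exp M F f x = g x"
proof -
  interpret prob_space M by (rule PS)
  interpret finite_measure_subalgebra M F by unfold_locales (rule sub)
  have PP: "P \<subseteq> Pow (space M)" using PM sets.sets_into_space by blast
  have SS: "sigma_sets (space M) P \<subseteq> sets M" by (rule sets.sigma_sets_subset[OF PM])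
  show ?thesis
  proof (rule real_cond_exp_charact)
    fix A assume "A \<in> sets F"
    then have "A \<in> sigma_sets (space M) P" using gen by auto
    with IS PP show "(\<integral>x\<in>A. f x \<partial>M) = (\<integral>x\<in>A. g x \<partial>M)"
    proof (induct rule: sigma_sets_induct_disjoint)
      case (basic A) then show ?case by (rule eq)
    next
      case empty then show ?case by (simp add: set_lebesgue_integral_def)
    next
      case (compl A)
      have A: "A \<in> sets M" using compl SS by auto
      have "(\<integral>x\<in>space M. f x \<partial>M) = (\<integral>x\<in>A. f x \<partial>M) + (\<integral>x\<in>space M - A. f x \<partial>M)"
        "(\<integral>x\<in>space M. g x \<partial>M) = (\<integral>x\<in>A. g x \<partial>M) + (\<integral>x\<in>space M - A. g x \<partial>M)"
        using set_integral_Un[of A "space M - A" M f] set_integral_Un[of A "space M - A" M g]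
          si_helper[of M f A] si_helper[of M f "space M - A"] si_helper[of M g A] si_helper[of M g "space M - A"]
          A Un_absorb1[OF sets.sets_into_space[OF A]] assms(7,8) by auto
      moreover have "(\<integral>x\<in>space M. f x \<partial>M) = (\<integral>x\<in>space M. g x \<partial>M)" by (rule eq[OF sp])
      ultimately show ?case using compl(2) by linarith
    next
      case (union A)
      have A: "\<And>i. A i \<in> sets M" using union SS by auto
      have U: "(\<Union>i. A i) \<in> sets M" using A by auto
      have d: "\<And>i j. i \<noteq> j \<Longrightarrow> A i \<inter> A j = {}" using union(1) unfolding disjoint_family_on_def by auto
      show ?case
        using lebesgue_integral_countable_add[OF A d si_helper[OF _ U], of f]
          lebesgue_integral_countable_add[OF A d si_helper[OF _ U], of g] union(3) assms(7,8) by simp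
    qed
  qed (use assms in auto)
qed

lemma indep_fubini:
  fixes Fn :: "'b \<Rightarrow> 'c \<Rightarrow> real"
  assumes PS: "prob_space M" and rvX[measurable]: "X \<in> measurable M S" and rvZ[measurable]: "Z \<in> measurable M T"
    and ind: "\<And>A B. A \<in> sets S \<Longrightarrow> B \<in> sets T \<Longrightarrow>
       measure M (X -` A \<inter> Z -` B \<inter> space M) = measure M (X -` A \<inter> space M) * measure M (Z -` B \<inter> space M)"
    and Fm: "(\<lambda>p. Fn (fst p) (snd p)) \<in> borel_measurable (S \<Otimes>\<^sub>M T)" and Fb: "\<And>y z. \<bar>Fn y z\<bar> \<le> B"
  shows "(\<integral>\<omega>. Fn (X \<omega>) (Z \<omega>) \<partial>M) = (\<integral>y. (\<integral>\<omega>. Fn y (Z \<omega>) \<partial>M) \<partial>distr M S X)"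
proof -
  interpret prob_space M by (rule PS)
  interpret X: prob_space "distr M S X" by (rule prob_space_distr) simp
  interpret Z: prob_space "distr M T Z" by (rule prob_space_distr) simp
  interpret XZ: pair_prob_space "distr M S X" "distr M T Z" ..
  have XZm: "(\<lambda>\<omega>. (X \<omega>, Z \<omega>)) \<in> measurable M (S \<Otimes>\<^sub>M T)" by simp
  have eq: "distr M S X \<Otimes>\<^sub>M distr M T Z = distr M (S \<Otimes>\<^sub>M T) (\<lambda>\<omega>. (X \<omega>, Z \<omega>))"
  proof (rule pair_measure_eqI)
    show "sigma_finite_measure (distr M S X)" ..
    show "sigma_finite_measure (distr M T Z)" ..
    fix A B assume A: "A \<in> sets (distr M S X)" and B: "B \<in> sets (distr M T Z)"
    have "emeasure (distr M (S \<Otimes>\<^sub>M T) (\<lambda>\<omega>. (X \<omega>, Z \<omega>))) (A \<times> B) = emeasure M ((\<lambda>x. (X x, Z x)) -` (A \<times> B) \<inter> space M)"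
      using A B by (intro emeasure_distr[OF XZm]) auto
    also have "(\<lambda>x. (X x, Z x)) -` (A \<times> B) \<inter> space M = X -` A \<inter> Z -` B \<inter> space M" by auto
    also have "emeasure M (X -` A \<inter> Z -` B \<inter> space M) = emeasure M (X -` A \<inter> space M) * emeasure M (Z -` B \<inter> space M)"
      using ind[of A B] A B by (simp add: emeasure_eq_measure measure_nonneg ennreal_mult)
    also have "\<dots> = emeasure (distr M S X) A * emeasure (distr M T Z) B"
      using A B by (simp add: emeasure_distr)
    finally show "emeasure (distr M S X) A * emeasure (distr M T Z) B = emeasure (distr M (S \<Otimes>\<^sub>M T) (\<lambda>\<omega>. (X \<omega>, Z \<omega>))) (A \<times> B)" by simp
  qed simp
  have Fm'[measurable]: "(\<lambda>p. Fn (fst p) (snd p)) \<in> borel_measurable (distr M S X \<Otimes>\<^sub>M distr M T Z)"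
    using Fm by (simp add: eq)
  have "(\<integral>\<omega>. Fn (X \<omega>) (Z \<omega>) \<partial>M) = (\<integral>p. Fn (fst p) (snd p) \<partial>distr M (S \<Otimes>\<^sub>M T) (\<lambda>\<omega>. (X \<omega>, Z \<omega>)))"
    by (subst integral_distr) (use Fm in auto)
  also have "\<dots> = (\<integral>p. Fn (fst p) (snd p) \<partial>(distr M S X \<Otimes>\<^sub>M distr M T Z))" by (simp add: eq)
  also have "\<dots> = (\<integral>y. (\<integral>z. Fn y z \<partial>distr M T Z) \<partial>distr M S X)"
    by (rule XZ.integral_fst'[symmetric, where f="\<lambda>p. Fn (fst p) (snd p)", simplified])
       (rule XZ.P.integrable_const_bound[where B=B], auto simp: Fb)
  also have "\<dots> = (\<integral>y. (\<integral>\<omega>. Fn y (Z \<omega>) \<partial>M) \<partial>distr M S X)"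
  proof (rule Bochner_Integration.integral_cong[OF refl])
    fix y assume "y \<in> space (distr M S X)"
    then have y: "y \<in> space S" by simp
    have "(\<lambda>z. Fn (fst (y, z)) (snd (y, z))) \<in> borel_measurable T"
      by (rule measurable_Pair2[OF Fm y])
    then show "(\<integral>z. Fn y z \<partial>distr M T Z) = (\<integral>\<omega>. Fn y (Z \<omega>) \<partial>M)"
      by (subst integral_distr) auto
  qed
  finally show ?thesis .
qed

lemma finite_Ball_sets:
  assumes "finite C" "\<And>c. c \<in> C \<Longrightarrow> {\<omega>\<in>space M. P c \<omega>} \<in> sets M"
  shows "{\<omega>\<in>space M. \<forall>c\<in>C. P c \<omega>} \<in> sets M"
  using assms
proof (induction C rule: finite_induct)
  case empty then show ?case by simp
next
  case (insert c0 C)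
  have "{\<omega>\<in>space M. \<forall>c\<in>insert c0 C. P c \<omega>} = {\<omega>\<in>space M. P c0 \<omega>} \<inter> {\<omega>\<in>space M. \<forall>c\<in>C. P c \<omega>}" by auto
  then show ?case using insert by auto
qed

lemma sorted_facts:
  fixes X :: "real set"
  assumes "finite X" "X \<subseteq> {0..a}" "0 \<in> X" "a \<in> X"
  defines "xs \<equiv> sorted_list_of_set X"
  shows "length xs \<ge> 1" "xs ! 0 = 0" "xs ! (length xs - 1) = a"
    "\<And>i j. i \<le> j \<Longrightarrow> j < length xs \<Longrightarrow> xs ! i \<le> xs ! j"
    "\<And>x. x \<in> X \<Longrightarrow> \<exists>j<length xs. xs ! j = x"
    "\<And>j. j < length xs \<Longrightarrow> xs ! j \<in> X"
proof -
  have set: "set xs = X" unfolding xs_def using assms by simp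
  have sorted: "sorted xs" unfolding xs_def by simp
  show mono: "\<And>i j. i \<le> j \<Longrightarrow> j < length xs \<Longrightarrow> xs ! i \<le> xs ! j"
    using sorted by (rule sorted_nth_mono)
  show ex: "\<And>x. x \<in> X \<Longrightarrow> \<exists>j<length xs. xs ! j = x" using set by (auto simp: in_set_conv_nth)
  show mem: "\<And>j. j < length xs \<Longrightarrow> xs ! j \<in> X" using set nth_mem by blast
  show n: "length xs \<ge> 1" using set assms(3) by (cases xs) auto
  obtain j0 where j0: "j0 < length xs" "xs ! j0 = 0" using ex assms(3) by blast
  have "xs ! 0 \<le> 0" using mono[of 0 j0] j0 by auto
  moreover have "xs ! 0 \<ge> 0" using mem[of 0] n assms(2) by force
  ultimately show "xs ! 0 = 0" by simp
  obtain j1 where j1: "j1 < length xs" "xs ! j1 = a" using ex assms(4) by blast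
  have "a \<le> xs ! (length xs - 1)" using mono[of j1 "length xs - 1"] j1 by auto
  moreover have "xs ! (length xs - 1) \<le> a" using mem[of "length xs - 1"] n assms(2) by force
  ultimately show "xs ! (length xs - 1) = a" by simp
qed

lemma indep_fubini':
  fixes Fn :: "'b \<Rightarrow> 'c \<Rightarrow> real"
  assumes PS: "prob_space M" and rvX[measurable]: "X \<in> measurable M S" and rvZ[measurable]: "Z \<in> measurable M T"
    and ind: "\<And>A B. A \<in> sets S \<Longrightarrow> B \<in> sets T \<Longrightarrow>
       measure M (X -` A \<inter> Z -` B \<inter> space M) = measure M (X -` A \<inter> space M) * measure M (Z -` B \<inter> space M)"
    and Fm: "(\<lambda>p. Fn (fst p) (snd p)) \<in> borel_measurable (S \<Otimes>\<^sub>M T)" and Fb: "\<And>y z. \<bar>Fn y z\<bar> \<le> B"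
  shows "(\<integral>\<omega>. Fn (X \<omega>) (Z \<omega>) \<partial>M) = (\<integral>y. (\<integral>z. Fn y z \<partial>distr M T Z) \<partial>distr M S X)"
    and "(\<lambda>y. (\<integral>z. Fn y z \<partial>distr M T Z)) \<in> borel_measurable S"
proof -
  interpret prob_space M by (rule PS)
  interpret Z: prob_space "distr M T Z" by (rule prob_space_distr) simp
  have "(\<integral>\<omega>. Fn (X \<omega>) (Z \<omega>) \<partial>M) = (\<integral>y. (\<integral>\<omega>. Fn y (Z \<omega>) \<partial>M) \<partial>distr M S X)"
    by (rule indep_fubini[OF PS rvX rvZ ind Fm Fb])
  also have "\<dots> = (\<integral>y. (\<integral>z. Fn y z \<partial>distr M T Z) \<partial>distr M S X)"
  proof (rule Bochner_Integration.integral_cong[OF refl])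
    fix y assume "y \<in> space (distr M S X)"
    then have y: "y \<in> space S" by simp
    have "(\<lambda>z. Fn (fst (y, z)) (snd (y, z))) \<in> borel_measurable T"
      by (rule measurable_Pair2[OF Fm y])
    then show "(\<integral>\<omega>. Fn y (Z \<omega>) \<partial>M) = (\<integral>z. Fn y z \<partial>distr M T Z)"
      by (subst integral_distr) auto
  qed
  finally show "(\<integral>\<omega>. Fn (X \<omega>) (Z \<omega>) \<partial>M) = (\<integral>y. (\<integral>z. Fn y z \<partial>distr M T Z) \<partial>distr M S X)" .
  have "case_prod Fn \<in> borel_measurable (S \<Otimes>\<^sub>M distr M T Z)"
    using Fm by (simp add: case_prod_beta' cong: measurable_cong_sets)
  then show "(\<lambda>y. (\<integral>z. Fn y z \<partial>distr M T Z)) \<in> borel_measurable S"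
    by (rule Z.borel_measurable_lebesgue_integral)
qed

lemma hdiff_meas:
  fixes h :: "int \<Rightarrow> real"
  assumes "u \<in> measurable S (count_space UNIV)" "v \<in> measurable S (count_space (UNIV :: nat set))"
  shows "(\<lambda>z. h (int (u z) - int (v z))) \<in> borel_measurable S"
proof -
  have "(\<lambda>z. (u z, v z)) \<in> measurable S (count_space UNIV \<Otimes>\<^sub>M count_space UNIV)"
    using assms by (rule measurable_Pair)
  then have m: "(\<lambda>z. (u z, v z)) \<in> measurable S (count_space (UNIV :: (nat \<times> nat) set))"
    by (simp add: pair_measure_countable)
  have "(\<lambda>p::nat \<times> nat. h (int (fst p) - int (snd p))) \<in> borel_measurable (count_space UNIV)" by simp
  from measurable_compose[OF m this] show ?thesis by simp
qed

lemma pois_trig: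
  fixes \<mu> u :: real
  shows "(\<lambda>k. cos (u * real_of_int (int k)) * (\<mu> ^ k / fact k * exp (- \<mu>))) sums
           Re (exp (complex_of_real \<mu> * (exp (\<i> * complex_of_real u) - 1)))"
    and "(\<lambda>k. sin (u * real_of_int (int k)) * (\<mu> ^ k / fact k * exp (- \<mu>))) sums
           Im (exp (complex_of_real \<mu> * (exp (\<i> * complex_of_real u) - 1)))"
proof -
  define z where "z = complex_of_real \<mu> * cis u"
  have zk: "z ^ k = complex_of_real (\<mu> ^ k) * cis (real k * u)" for k
    unfolding z_def by (simp add: power_mult_distrib Complex.DeMoivre)
  have ez: "exp (complex_of_real \<mu> * (exp (\<i> * complex_of_real u) - 1)) = exp z * complex_of_real (exp (- \<mu>))"
  proof -
    have "complex_of_real \<mu> * (exp (\<i> * complex_of_real u) - 1) = z + complex_of_real (- \<mu>)"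
      unfolding z_def cis_conv_exp by (simp add: algebra_simps)
    then have "exp (complex_of_real \<mu> * (exp (\<i> * complex_of_real u) - 1)) = exp (z + complex_of_real (- \<mu>))" by (rule arg_cong)
    also have "\<dots> = exp z * exp (complex_of_real (- \<mu>))" by (rule exp_add)
    also have "exp (complex_of_real (- \<mu>)) = complex_of_real (exp (- \<mu>))" by (rule exp_of_real)
    finally show ?thesis .
  qed
  have S: "(\<lambda>k. z ^ k /\<^sub>R fact k) sums exp z" by (rule exp_converges)
  have SR: "(\<lambda>k. Re (z ^ k /\<^sub>R fact k)) sums Re (exp z)" by (rule sums_Re[OF S])
  have SI: "(\<lambda>k. Im (z ^ k /\<^sub>R fact k)) sums Im (exp z)" by (rule sums_Im[OF S])
  have "(\<lambda>k. Re (z ^ k /\<^sub>R fact k) * exp (- \<mu>)) sums (Re (exp z) * exp (- \<mu>))"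
    by (rule sums_mult2[OF SR])
  moreover have "Re (z ^ k /\<^sub>R fact k) * exp (- \<mu>) = cos (u * real_of_int (int k)) * (\<mu> ^ k / fact k * exp (- \<mu>))" for k
    unfolding zk by (simp add: field_simps)
  moreover have "Re (exp z) * exp (- \<mu>) = Re (exp (complex_of_real \<mu> * (exp (\<i> * complex_of_real u) - 1)))"
    unfolding ez by simp
  ultimately show "(\<lambda>k. cos (u * real_of_int (int k)) * (\<mu> ^ k / fact k * exp (- \<mu>))) sums
           Re (exp (complex_of_real \<mu> * (exp (\<i> * complex_of_real u) - 1)))" by simp
  have "(\<lambda>k. Im (z ^ k /\<^sub>R fact k) * exp (- \<mu>)) sums (Im (exp z) * exp (- \<mu>))"
    by (rule sums_mult2[OF SI])
  moreover have "Im (z ^ k /\<^sub>R fact k) * exp (- \<mu>) = sin (u * real_of_int (int k)) * (\<mu> ^ k / fact k * exp (- \<mu>))" for k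
    unfolding zk by (simp add: field_simps)
  moreover have "Im (exp z) * exp (- \<mu>) = Im (exp (complex_of_real \<mu> * (exp (\<i> * complex_of_real u) - 1)))"
    unfolding ez by simp
  ultimately show "(\<lambda>k. sin (u * real_of_int (int k)) * (\<mu> ^ k / fact k * exp (- \<mu>))) sums
           Im (exp (complex_of_real \<mu> * (exp (\<i> * complex_of_real u) - 1)))" by simp
qed




lemma gen_sigma_space[simp]: "space (gen_sigma M I X N) = space M"
  unfolding gen_sigma_def by (rule space_measure_of) auto

lemma gen_sigma_sets: "sets (gen_sigma M I X N) = sigma_sets (space M) {X i -` B \<inter> space M | i B. i \<in> I \<and> B \<in> sets N}"
  unfolding gen_sigma_def by (rule sets_measure_of) auto

lemma gen_sigma_sub:
  assumes "\<And>i. i \<in> I \<Longrightarrow> X i \<in> measurable M N"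
  shows "sets (gen_sigma M I X N) \<subseteq> sets M"
  unfolding gen_sigma_sets
  by (rule sets.sigma_sets_subset) (use assms measurable_sets in blast)

lemma gen_sigma_meas:
  assumes "i \<in> I" "X i \<in> space M \<rightarrow> space N"
  shows "X i \<in> measurable (gen_sigma M I X N) N"
proof (rule measurableI)
  show "x \<in> space (gen_sigma M I X N) \<Longrightarrow> X i x \<in> space N" for x using assms by auto
  fix A assume "A \<in> sets N"
  then show "X i -` A \<inter> space (gen_sigma M I X N) \<in> sets (gen_sigma M I X N)"
    unfolding gen_sigma_sets gen_sigma_space using assms by (intro sigma_sets.Basic) blast
qed

locale fnpp =
  fixes M :: "'a measure"
    and N1 :: "real \<Rightarrow> 'a \<Rightarrow> nat"
    and lam :: "real \<Rightarrow> real"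
    and \<alpha> :: real
    and L :: "real \<Rightarrow> 'a \<Rightarrow> real"
  assumes PS: "prob_space M"
    and N1: "std_poisson_process M N1"
    and lam_pos: "\<forall>x\<ge>0. 0 < lam x"
    and lam_loc_int: "\<forall>t\<ge>0. set_integrable lborel {0..t} lam"
    and L: "stable_subordinator \<alpha> M L"
    and indep: "prob_space.indep_set M
        (sets (gen_sigma M {0..} (inverse_subordinator L) borel))
        (sets (gen_sigma M {0..} N1 (count_space UNIV)))"
begin

interpretation prob_space M by (rule PS)

abbreviation "Lam \<equiv> cum_intensity lam"

lemma Lam_nonneg: "0 \<le> Lam x"
  unfolding cum_intensity_def set_lebesgue_integral_def
  by (rule integral_nonneg_AE) (use lam_pos in \<open>auto simp: indicator_def intro: less_imp_le\<close>)

lemma Lam_mono: assumes "x \<le> y" shows "Lam x \<le> Lam y"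
proof (cases "y < 0")
  case True then show ?thesis using assms by (simp add: cum_intensity_def)
next
  case False
  have int: "set_integrable lborel {0..y} lam" using lam_loc_int False by auto
  have "set_integrable lborel {0..x} lam"
    by (rule set_integrable_subset[OF int]) (use assms in auto)
  then show ?thesis
    unfolding cum_intensity_def set_lebesgue_integral_def
    using int unfolding set_integrable_def
    by (intro integral_mono) (use assms in \<open>auto simp: indicator_def intro: less_imp_le lam_pos[rule_format]\<close>)
qed

lemma Lam_cont: "continuous_on UNIV Lam"
  unfolding cum_intensity_def[abs_def]
  by (rule continuous_on_LBINT) (use lam_loc_int in auto)

lemma Lam_meas[measurable]: "Lam \<in> borel_measurable borel"
  using Lam_cont by (simp add: borel_measurable_continuous_onI)

lemma N1_meas[measurable]: "N1 t \<in> measurable M (count_space UNIV)"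
  using N1 unfolding std_poisson_process_def by auto
lemma N1_0: "\<omega> \<in> space M \<Longrightarrow> N1 0 \<omega> = 0"
  using N1 unfolding std_poisson_process_def by auto
lemma N1_mono: "\<omega> \<in> space M \<Longrightarrow> 0 \<le> s \<Longrightarrow> s \<le> t \<Longrightarrow> N1 s \<omega> \<le> N1 t \<omega>"
  using N1 unfolding std_poisson_process_def by auto
lemma N1_rc: "\<omega> \<in> space M \<Longrightarrow> 0 \<le> t \<Longrightarrow> continuous (at_right t) (\<lambda>s. real (N1 s \<omega>))"
  using N1 unfolding std_poisson_process_def by auto
lemma N1_indep: "indep_increments M (\<lambda>t \<omega>. real (N1 t \<omega>))"
  using N1 unfolding std_poisson_process_def by auto
lemma N1_dist: "0 \<le> s \<Longrightarrow> s \<le> t \<Longrightarrow>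
    measure M {\<omega>\<in>space M. N1 t \<omega> - N1 s \<omega> = k} = (t - s) ^ k / fact k * exp (-(t - s))"
  using N1 unfolding std_poisson_process_def by auto

lemma L_meas[measurable]: "L t \<in> borel_measurable M"
  using L unfolding stable_subordinator_def levy_process_def by auto
lemma L_mono: "\<omega> \<in> space M \<Longrightarrow> 0 \<le> s \<Longrightarrow> s \<le> t \<Longrightarrow> L s \<omega> \<le> L t \<omega>"
  using L unfolding stable_subordinator_def by auto
lemma L_0: "\<omega> \<in> space M \<Longrightarrow> L 0 \<omega> = 0"
  using L unfolding stable_subordinator_def levy_process_def by auto
lemma L_lap: "0 \<le> t \<Longrightarrow> 0 \<le> u \<Longrightarrow> expectation (\<lambda>\<omega>. exp (- u * L t \<omega>)) = exp (- t * u powr \<alpha>)"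
  using L unfolding stable_subordinator_def by auto

lemma nat_close_eq: "\<bar>real a - real b\<bar> < 1/2 \<Longrightarrow> a = b"
proof (rule ccontr)
  assume h: "\<bar>real a - real b\<bar> < 1/2" "a \<noteq> b"
  then have "a + 1 \<le> b \<or> b + 1 \<le> a" by linarith
  then have "real a + 1 \<le> real b \<or> real b + 1 \<le> real a" by (metis of_nat_1 of_nat_add of_nat_le_iff)
  with h show False by linarith
qed

lemma N1_rat:
  assumes "\<omega> \<in> space M" "0 \<le> x"
  shows "N1 x \<omega> \<le> k \<longleftrightarrow> (\<exists>q::rat. x < of_rat q \<and> N1 (of_rat q) \<omega> \<le> k)"
proof
  assume k: "N1 x \<omega> \<le> k"
  have "((\<lambda>s. real (N1 s \<omega>)) \<longlongrightarrow> real (N1 x \<omega>)) (at_right x)"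
    using N1_rc[OF assms] by (simp add: continuous_within)
  then have "\<forall>\<^sub>F s in at_right x. dist (real (N1 s \<omega>)) (real (N1 x \<omega>)) < 1/2"
    by (rule tendstoD) simp
  then obtain b where d: "b > x" and dd: "\<And>s. x < s \<Longrightarrow> s < b \<Longrightarrow> dist (real (N1 s \<omega>)) (real (N1 x \<omega>)) < 1/2"
    unfolding eventually_at_right_field by blast
  obtain q where q: "x < of_rat q" "of_rat q < b"
    using of_rat_dense[OF d] by blast
  have "dist (real (N1 (of_rat q) \<omega>)) (real (N1 x \<omega>)) < 1/2" using dd q by auto
  then have "N1 (of_rat q) \<omega> = N1 x \<omega>" unfolding dist_real_def
    by (rule nat_close_eq)
  with q k show "\<exists>q::rat. x < of_rat q \<and> N1 (of_rat q) \<omega> \<le> k" by auto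
next
  assume "\<exists>q::rat. x < of_rat q \<and> N1 (of_rat q) \<omega> \<le> k"
  then obtain q where "x < of_rat q" "N1 (of_rat q) \<omega> \<le> k" by auto
  then show "N1 x \<omega> \<le> k" using N1_mono[OF assms(1) assms(2), of "of_rat q"] by auto
qed

lemma N1_comp_meas:
  assumes x[measurable]: "x \<in> borel_measurable S" and xnn: "\<And>z. z \<in> space S \<Longrightarrow> 0 \<le> x z"
    and w: "\<And>z. z \<in> space S \<Longrightarrow> w z \<in> space M"
    and Nw: "\<And>q. 0 < q \<Longrightarrow> (\<lambda>z. N1 q (w z)) \<in> measurable S (count_space UNIV)"
  shows "(\<lambda>z. N1 (x z) (w z)) \<in> measurable S (count_space UNIV)"
proof -
  have le: "{z\<in>space S. N1 (x z) (w z) \<le> k} \<in> sets S" for k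
  proof -
    define A where "A q = (if 0 < real_of_rat q then {z\<in>space S. x z < of_rat q} \<inter> {z\<in>space S. N1 (of_rat q) (w z) \<le> k} else {})" for q
    have "{z\<in>space S. N1 (x z) (w z) \<le> k} = (\<Union>q. A q)"
    proof (intro set_eqI iffI)
      fix z assume "z \<in> {z\<in>space S. N1 (x z) (w z) \<le> k}"
      then have z: "z \<in> space S" "N1 (x z) (w z) \<le> k" by auto
      then obtain q where "x z < of_rat q \<and> N1 (of_rat q) (w z) \<le> k"
        using N1_rat[OF w[OF z(1)] xnn[OF z(1)]] by auto
      moreover have "0 < real_of_rat q" using calculation xnn[OF z(1)] by linarith
      ultimately show "z \<in> (\<Union>q. A q)" using z unfolding A_def by auto
    next
      fix z assume "z \<in> (\<Union>q. A q)"
      then obtain q where "z \<in> A q" by auto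
      then have z: "z \<in> space S" "x z < of_rat q" "N1 (of_rat q) (w z) \<le> k"
        unfolding A_def by (auto split: if_splits)
      then show "z \<in> {z\<in>space S. N1 (x z) (w z) \<le> k}"
        using N1_rat[OF w[OF z(1)] xnn[OF z(1)]] by auto
    qed
    moreover have "A q \<in> sets S" for q
    proof (cases "0 < real_of_rat q")
      case True
      have m: "(\<lambda>z. N1 (of_rat q) (w z)) \<in> measurable S (count_space UNIV)" using Nw True by auto
      have "{z\<in>space S. N1 (of_rat q) (w z) \<le> k} \<in> sets S"
        using measurable_sets[OF m, of "{..k}"] by (simp add: vimage_def Int_def conj_commute)
      moreover have "{z\<in>space S. x z < of_rat q} \<in> sets S" by measurable
      ultimately show ?thesis using True unfolding A_def by auto
    qed (auto simp: A_def)
    ultimately show ?thesis by auto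
  qed
  show ?thesis
    unfolding measurable_count_space_eq2_countable
  proof safe
    fix k :: nat
    show "(\<lambda>z. N1 (x z) (w z)) -` {k} \<inter> space S \<in> sets S"
    proof (cases k)
      case 0
      then show ?thesis using le[of 0] by (simp add: vimage_def Int_def conj_commute)
    next
      case (Suc j)
      have "(\<lambda>z. N1 (x z) (w z)) -` {k} \<inter> space S = {z\<in>space S. N1 (x z) (w z) \<le> k} - {z\<in>space S. N1 (x z) (w z) \<le> j}"
        using Suc by auto
      then show ?thesis using le[of k] le[of j] by auto
    qed
  qed simp
qed

abbreviation "Y \<equiv> inverse_subordinator L"

lemma Y_def': "Y t \<omega> = Inf {u. 0 \<le> u \<and> t < L u \<omega>}"
  by (simp add: inverse_subordinator_def)

lemma S_ne: assumes "\<omega> \<in> space M"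
  shows "{u. 0 \<le> u \<and> t < L u \<omega>} \<noteq> {} \<longleftrightarrow> (\<exists>n::nat. t < L (real n) \<omega>)"
proof
  assume "{u. 0 \<le> u \<and> t < L u \<omega>} \<noteq> {}"
  then obtain u where u: "0 \<le> u" "t < L u \<omega>" by auto
  obtain n :: nat where "u \<le> real n" using real_arch_simple by blast
  then have "L u \<omega> \<le> L (real n) \<omega>" using L_mono[OF assms u(1)] by auto
  then show "\<exists>n::nat. t < L (real n) \<omega>" using u by (intro exI[of _ n]) linarith
qed force

lemma Y_less: assumes "\<omega> \<in> space M" "\<exists>n::nat. t < L (real n) \<omega>"
  shows "Y t \<omega> < x \<longleftrightarrow> (\<exists>q::rat. 0 \<le> real_of_rat q \<and> of_rat q < x \<and> t < L (of_rat q) \<omega>)"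
proof -
  let ?S = "{u. 0 \<le> u \<and> t < L u \<omega>}"
  have ne: "?S \<noteq> {}" using S_ne[OF assms(1)] assms(2) by blast
  have bdd: "bdd_below ?S" by (rule bdd_belowI[of _ 0]) auto
  show ?thesis
  proof
    assume "Y t \<omega> < x"
    then obtain u where u: "u \<in> ?S" "u < x" using cInf_less_iff[OF ne bdd] Y_def' by auto
    obtain q where q: "u < of_rat q" "of_rat q < x" using of_rat_dense[OF u(2)] by blast
    have "L u \<omega> \<le> L (of_rat q) \<omega>" using L_mono[OF assms(1), of u "of_rat q"] u q by auto
    then show "\<exists>q::rat. 0 \<le> real_of_rat q \<and> of_rat q < x \<and> t < L (of_rat q) \<omega>"
      using u q by (intro exI[of _ q]) (auto simp del: zero_le_of_rat_iff)
  next
    assume "\<exists>q::rat. 0 \<le> real_of_rat q \<and> of_rat q < x \<and> t < L (of_rat q) \<omega>"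
    then obtain q where q: "0 \<le> real_of_rat q" "of_rat q < x" "t < L (of_rat q) \<omega>" by auto
    have "Y t \<omega> \<le> of_rat q" unfolding Y_def' by (rule cInf_lower) (use q bdd in auto)
    then show "Y t \<omega> < x" using q by linarith
  qed
qed

lemma Y_meas[measurable]: "Y t \<in> borel_measurable M"
proof (rule borel_measurableI_less)
  fix x
  have "{\<omega>\<in>space M. Y t \<omega> < x} = {\<omega>\<in>space M. ((\<exists>n::nat. t < L (real n) \<omega>) \<and>
       (\<exists>q::rat. 0 \<le> real_of_rat q \<and> of_rat q < x \<and> t < L (of_rat q) \<omega>)) \<or>
       ((\<forall>n::nat. L (real n) \<omega> \<le> t) \<and> Inf ({}::real set) < x)}"
  proof (intro set_eqI)
    fix \<omega>
    show "\<omega> \<in> {\<omega>\<in>space M. Y t \<omega> < x} \<longleftrightarrow> \<omega> \<in> {\<omega>\<in>space M. ((\<exists>n::nat. t < L (real n) \<omega>) \<and>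
       (\<exists>q::rat. 0 \<le> real_of_rat q \<and> of_rat q < x \<and> t < L (of_rat q) \<omega>)) \<or>
       ((\<forall>n::nat. L (real n) \<omega> \<le> t) \<and> Inf ({}::real set) < x)}"
    proof (cases "\<omega> \<in> space M")
      case True
      show ?thesis
      proof (cases "\<exists>n::nat. t < L (real n) \<omega>")
        case True
        then show ?thesis using Y_less[OF \<open>\<omega> \<in> space M\<close> True] \<open>\<omega> \<in> space M\<close> by (auto simp: not_le) (meson not_le)
      next
        case False
        then have "{u. 0 \<le> u \<and> t < L u \<omega>} = {}" using S_ne[OF \<open>\<omega> \<in> space M\<close>] by blast
        then have "Y t \<omega> = Inf {}" unfolding Y_def' by (rule arg_cong)
        then show ?thesis using False \<open>\<omega> \<in> space M\<close> by (auto simp: not_less) (meson not_le)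
      qed
    qed auto
  qed
  also have "\<dots> \<in> sets M" by measurable
  finally show "{\<omega>\<in>space M. Y t \<omega> < x} \<in> sets M" .
qed

definition "Lm t \<omega> = Lam (Y t \<omega>)"
definition "Na t \<omega> = N1 (Lm t \<omega>) \<omega>"

lemma Lm_meas[measurable]: "Lm t \<in> borel_measurable M"
  unfolding Lm_def by measurable

lemma Lm_nonneg: "0 \<le> Lm t \<omega>" unfolding Lm_def by (rule Lam_nonneg)

lemma Na_meas[measurable]: "Na t \<in> measurable M (count_space UNIV)"
  unfolding Na_def by (rule N1_comp_meas[where w="\<lambda>x. x"]) (auto simp: Lm_nonneg)

abbreviation "GY \<equiv> gen_sigma M {0..} Y borel"
abbreviation "GN \<equiv> gen_sigma M {0..} N1 (count_space UNIV)"
abbreviation "GNa s \<equiv> gen_sigma M {0..s} Na (count_space UNIV)"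
definition "F s = sigma (space M) (sets GY \<union> sets (GNa s))"

lemma GY_sub: "sets GY \<subseteq> sets M" by (rule gen_sigma_sub) simp
lemma GN_sub: "sets GN \<subseteq> sets M" by (rule gen_sigma_sub) simp
lemma GNa_sub: "sets (GNa s) \<subseteq> sets M" by (rule gen_sigma_sub) simp

lemma F_sets: "sets (F s) = sigma_sets (space M) (sets GY \<union> sets (GNa s))"
  unfolding F_def by (rule sets_measure_of) (use GY_sub GNa_sub sets.sets_into_space in blast)
lemma F_space[simp]: "space (F s) = space M"
  unfolding F_def by (rule space_measure_of) (use GY_sub GNa_sub sets.sets_into_space in blast)
lemma F_sub: "sets (F s) \<subseteq> sets M"
  unfolding F_sets by (rule sets.sigma_sets_subset) (use GY_sub GNa_sub in blast)
lemma F_subalg: "subalgebra M (F s)"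
  unfolding subalgebra_def using F_sub by simp
lemma GY_F: "sets GY \<subseteq> sets (F s)" unfolding F_sets by auto
lemma GNa_F: "sets (GNa s) \<subseteq> sets (F s)" unfolding F_sets by auto

lemma meas_mono_sets: "f \<in> measurable A N \<Longrightarrow> space A = space B \<Longrightarrow> sets A \<subseteq> sets B \<Longrightarrow> f \<in> measurable B N"
  unfolding measurable_def by auto

lemma Y_GY: "0 \<le> t \<Longrightarrow> Y t \<in> borel_measurable GY"
  by (rule gen_sigma_meas) auto
lemma Y_F: "0 \<le> t \<Longrightarrow> Y t \<in> borel_measurable (F s)"
  by (rule meas_mono_sets[OF Y_GY]) (auto simp: GY_F)
lemma Lm_F: "0 \<le> t \<Longrightarrow> Lm t \<in> borel_measurable (F s)"
  unfolding Lm_def[abs_def] by (rule measurable_compose[OF Y_F Lam_meas])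
lemma Na_F: "0 \<le> t \<Longrightarrow> t \<le> s \<Longrightarrow> Na t \<in> measurable (F s) (count_space UNIV)"
  by (rule meas_mono_sets[OF gen_sigma_meas[of t "{0..s}"]]) (use GNa_F[of s] in auto)

lemma F_mono: "s \<le> t \<Longrightarrow> sets (F s) \<subseteq> sets (F t)"
proof -
  assume "s \<le> t"
  have "sets (GNa s) \<subseteq> sets (GNa t)" unfolding gen_sigma_sets
    by (rule sigma_sets_mono) (use \<open>s \<le> t\<close> in force)
  then show ?thesis unfolding F_sets by (intro sigma_sets_mono) auto
qed

lemma L_nonneg: "\<omega> \<in> space M \<Longrightarrow> 0 \<le> t \<Longrightarrow> 0 \<le> L t \<omega>"
  using L_mono[of \<omega> 0 t] L_0 by auto

lemma L_small_prob: "prob {\<omega>\<in>space M. L (real n) \<omega> \<le> m} \<le> exp (m - real n)"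
proof -
  have int: "integrable M (\<lambda>\<omega>. exp (- 1 * L (real n) \<omega>))"
    by (rule integrable_const_bound[where B=1]) (auto intro!: AE_I2 simp: L_nonneg)
  have "{\<omega>\<in>space M. L (real n) \<omega> \<le> m} = {\<omega>\<in>space M. exp (- 1 * L (real n) \<omega>) \<ge> exp (-m)}"
    by auto
  also have "prob \<dots> \<le> expectation (\<lambda>\<omega>. exp (- 1 * L (real n) \<omega>)) / exp (-m)"
    by (rule integral_Markov_inequality_measure[OF int]) auto
  also have "\<dots> = exp (- real n) / exp (-m)" using L_lap[of "real n" 1] by simp
  also have "\<dots> = exp (m - real n)" by (simp add: exp_diff exp_minus field_simps)
  finally show ?thesis .
qed

lemma L_unbdd_AE: "AE \<omega> in M. \<forall>m::nat. \<exists>n::nat. real m < L (real n) \<omega>"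
proof (subst AE_all_countable, intro allI)
  fix m :: nat
  let ?B = "{\<omega>\<in>space M. \<forall>n::nat. L (real n) \<omega> \<le> real m}"
  have B: "?B \<in> sets M" by measurable
  have "prob ?B \<le> 0"
  proof (rule ccontr)
    assume "\<not> prob ?B \<le> 0"
    then have p: "0 < prob ?B" by simp
    obtain n :: nat where n: "real m - ln (prob ?B) < real n" using reals_Archimedean2 by blast
    have "prob ?B \<le> prob {\<omega>\<in>space M. L (real n) \<omega> \<le> real m}"
      by (rule finite_measure_mono) auto
    also have "\<dots> \<le> exp (real m - real n)" by (rule L_small_prob)
    also have "\<dots> < exp (ln (prob ?B))" using n by simp
    also have "\<dots> = prob ?B" using p by simp
    finally show False by simp
  qed
  then have "prob ?B = 0" using measure_nonneg[of M ?B] by linarith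
  then have "?B \<in> null_sets M" using B by (simp add: null_sets_def emeasure_eq_measure)
  then show "AE \<omega> in M. \<exists>n::nat. real m < L (real n) \<omega>"
    by (rule AE_I') (auto simp: not_less)
qed

definition "Good \<omega> \<longleftrightarrow> \<omega> \<in> space M \<and> (\<forall>m::nat. \<exists>n::nat. real m < L (real n) \<omega>)"

lemma Good_AE: "AE \<omega> in M. Good \<omega>"
  using L_unbdd_AE by (auto simp: Good_def)

lemma Good_ne: assumes "Good \<omega>" shows "\<exists>u\<ge>0. t < L u \<omega>"
proof -
  obtain m :: nat where "t < real m" using reals_Archimedean2 by blast
  moreover obtain n :: nat where "real m < L (real n) \<omega>" using assms by (auto simp: Good_def)
  ultimately show ?thesis by (intro exI[of _ "real n"]) auto
qed

lemma Good_bdd: "bdd_below {u. 0 \<le> u \<and> t < L u \<omega>}"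
  by (rule bdd_belowI[of _ 0]) auto

lemma Y_nonneg: "Good \<omega> \<Longrightarrow> 0 \<le> Y t \<omega>"
  unfolding Y_def' using Good_ne[of \<omega> t] by (intro cInf_greatest) auto

lemma Y_mono: assumes "Good \<omega>" "t1 \<le> t2" shows "Y t1 \<omega> \<le> Y t2 \<omega>"
  unfolding Y_def' using Good_ne[OF assms(1), of t2] assms(2)
  by (intro cInf_superset_mono Good_bdd) auto

lemma Y_rc: assumes "Good \<omega>" shows "continuous (at_right t) (\<lambda>s. Y s \<omega>)"
  unfolding continuous_within
proof (rule order_tendstoI)
  fix a assume "a < Y t \<omega>"
  then show "\<forall>\<^sub>F s in at_right t. a < Y s \<omega>"
    unfolding eventually_at_right_field using Y_mono[OF assms]
    by (intro exI[of _ "t + 1"]) (auto intro: less_le_trans)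
next
  fix b assume b: "Y t \<omega> < b"
  let ?S = "{u. 0 \<le> u \<and> t < L u \<omega>}"
  have ne: "?S \<noteq> {}" using Good_ne[OF assms] by auto
  obtain u where u: "u \<in> ?S" "u < b" using cInf_less_iff[OF ne Good_bdd] b Y_def' by auto
  show "\<forall>\<^sub>F s in at_right t. Y s \<omega> < b"
    unfolding eventually_at_right_field
  proof (intro exI[of _ "L u \<omega>"] conjI allI impI)
    show "t < L u \<omega>" using u by auto
    fix s assume "t < s" "s < L u \<omega>"
    then have "Y s \<omega> \<le> u" unfolding Y_def' using u by (intro cInf_lower Good_bdd) auto
    then show "Y s \<omega> < b" using u by auto
  qed
qed

lemma Lm_mono: "Good \<omega> \<Longrightarrow> s \<le> t \<Longrightarrow> Lm s \<omega> \<le> Lm t \<omega>"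
  unfolding Lm_def by (intro Lam_mono Y_mono)

lemma Lm_rc: assumes "Good \<omega>" shows "continuous (at_right t) (\<lambda>s. Lm s \<omega>)"
  unfolding Lm_def
  by (rule continuous_within_compose3[where g=Lam, OF _ Y_rc[OF assms]])
     (use Lam_cont in \<open>simp add: continuous_on_eq_continuous_within\<close>)

lemma K_lt:
  fixes h :: "int \<Rightarrow> real"
  assumes C: "finite C" "\<And>c. c \<in> C \<Longrightarrow> 0 \<le> fst c \<and> fst c \<le> a" and ab: "0 \<le> a" "a < b"
    and hb: "\<And>z. \<bar>h z\<bar> \<le> B"
  defines "Ev \<equiv> {\<omega>\<in>space M. \<forall>c\<in>C. N1 (fst c) \<omega> = snd c}"
  shows "(\<integral>\<omega>. indicator Ev \<omega> * h (int (N1 b \<omega>) - int (N1 a \<omega>)) \<partial>M)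
       = prob Ev * expectation (\<lambda>\<omega>. h (int (N1 b \<omega>) - int (N1 a \<omega>)))"
proof -
  define X where "X = insert 0 (insert a (fst ` C))"
  define xs where "xs = sorted_list_of_set X"
  define n where "n = length xs"
  have X: "finite X" "X \<subseteq> {0..a}" "0\<in>X" "a\<in>X" using C ab by (auto simp: X_def)
  note sf = sorted_facts[OF X, folded xs_def n_def]
  define ts where "ts i = (if i < n then xs ! i else b)" for i
  define D where "D i \<omega> = real (N1 (ts (Suc i)) \<omega>) - real (N1 (ts i) \<omega>)" for i \<omega>
  have n1: "n \<ge> 1" using sf by simp
  have ts0: "ts 0 = 0" using sf n1 by (simp add: ts_def)
  have tsn1: "ts (n - 1) = a" using sf n1 by (simp add: ts_def)
  have tsn: "ts n = b" by (simp add: ts_def)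
  have tsmono: "\<forall>i<n. ts i \<le> ts (Suc i)"
  proof (intro allI impI)
    fix i assume i: "i < n"
    show "ts i \<le> ts (Suc i)"
    proof (cases "Suc i < n")
      case True then show ?thesis using sf(4)[of i "Suc i"] by (simp add: ts_def)
    next
      case False
      then have "i = n - 1" using i by simp
      then show ?thesis using tsn1 tsn ab False by (simp add: ts_def)
    qed
  qed
  have indD: "indep_vars (\<lambda>_. borel) D {..<n}"
    using N1_indep ts0 tsmono unfolding indep_increments_def D_def by auto
  define J where "J x = (SOME j. j < n \<and> xs ! j = x)" for x
  have J: "J x < n \<and> xs ! (J x) = x" if "x \<in> X" for x
    unfolding J_def by (rule someI_ex) (use sf(5)[OF that] in auto)
  have tsJ: "ts (J x) = x" if "x \<in> X" for x using J[OF that] by (simp add: ts_def)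
  have tele: "(\<Sum>i<j. D i \<omega>) = real (N1 (ts j) \<omega>)" if "\<omega> \<in> space M" for j \<omega>
    unfolding D_def by (subst sum_lessThan_telescope) (simp add: ts0 N1_0[OF that])
  define A where "A = {..<n - 1}"
  define V where "V \<omega> = restrict (\<lambda>i. D i \<omega>) A" for \<omega>
  define W where "W \<omega> = restrict (\<lambda>i. D i \<omega>) {n - 1}" for \<omega>
  have iv: "indep_var (PiM A (\<lambda>_. borel)) V (PiM {n - 1} (\<lambda>_. borel)) W"
    unfolding V_def W_def by (rule indep_var_restrict[OF indD]) (use n1 in \<open>auto simp: A_def\<close>)
  have Dm[measurable]: "D i \<in> borel_measurable M" for i unfolding D_def by measurable
  define Q where "Q = {v \<in> space (PiM A (\<lambda>_. borel)). \<forall>c\<in>C. (\<Sum>i<J (fst c). v i) = real (snd c)}"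
  have Qm: "Q \<in> sets (PiM A (\<lambda>_. borel :: real measure))"
    unfolding Q_def
  proof (rule finite_Ball_sets[OF C(1)])
    fix c assume c: "c \<in> C"
    have "fst c \<in> X" using c by (auto simp: X_def)
    then have Jc: "J (fst c) \<le> n - 1" using J by fastforce
    have "(\<lambda>v. \<Sum>i<J (fst c). v i) \<in> borel_measurable (PiM A (\<lambda>_. borel :: real measure))"
    proof (rule borel_measurable_sum)
      fix i assume "i \<in> {..<J (fst c)}"
      then have "i \<in> A" using Jc by (auto simp: A_def)
      then show "(\<lambda>v. v i) \<in> borel_measurable (PiM A (\<lambda>_. borel :: real measure))"
        by (rule measurable_component_singleton)
    qed
    then show "{v \<in> space (PiM A (\<lambda>_. borel)). (\<Sum>i<J (fst c). v i) = real (snd c)} \<in> sets (PiM A (\<lambda>_. borel))"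
      by measurable
  qed
  define \<phi> where "\<phi> v = (indicator Q v :: real)" for v
  define \<psi> where "\<psi> w = h \<lfloor>w (n - 1)\<rfloor>" for w :: "nat \<Rightarrow> real"
  have \<phi>m: "\<phi> \<in> borel_measurable (PiM A (\<lambda>_. borel))" unfolding \<phi>_def using Qm by measurable
  have \<psi>m: "\<psi> \<in> borel_measurable (PiM {n - 1} (\<lambda>_. borel))"
  proof -
    have "(\<lambda>w. \<lfloor>w (n - 1)\<rfloor>) \<in> measurable (PiM {n - 1} (\<lambda>_. borel :: real measure)) (count_space UNIV)"
    proof (rule measurable_compose[where f="\<lambda>w. w (n - 1)"])
      show "(\<lambda>w. w (n - 1)) \<in> measurable (PiM {n - 1} (\<lambda>_. borel :: real measure)) borel"
        by (rule measurable_component_singleton) simp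
    qed (rule measurable_real_floor)
    then show ?thesis unfolding \<psi>_def by (rule measurable_compose) simp
  qed
  have iv2: "indep_var borel (\<phi> \<circ> V) borel (\<psi> \<circ> W)"
    by (rule indep_var_compose[OF iv \<phi>m \<psi>m])
  have eq\<phi>: "\<phi> (V \<omega>) = indicator Ev \<omega>" if \<omega>: "\<omega> \<in> space M" for \<omega>
  proof -
    have sp: "V \<omega> \<in> space (PiM A (\<lambda>_. borel))" unfolding V_def by (simp add: space_PiM)
    have "(\<Sum>i<J (fst c). V \<omega> i) = real (N1 (fst c) \<omega>)" if c: "c \<in> C" for c
    proof -
      have "fst c \<in> X" using c by (auto simp: X_def)
      then have Jc: "J (fst c) \<le> n - 1" using J by fastforce
      have "(\<Sum>i<J (fst c). V \<omega> i) = (\<Sum>i<J (fst c). D i \<omega>)"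
        by (rule sum.cong) (use Jc in \<open>auto simp: V_def A_def\<close>)
      also have "\<dots> = real (N1 (fst c) \<omega>)" using tele[OF \<omega>] tsJ[OF \<open>fst c \<in> X\<close>] by simp
      finally show ?thesis .
    qed
    then show ?thesis using sp \<omega> unfolding \<phi>_def Q_def Ev_def indicator_def by auto
  qed
  have eq\<psi>: "\<psi> (W \<omega>) = h (int (N1 b \<omega>) - int (N1 a \<omega>))" if \<omega>: "\<omega> \<in> space M" for \<omega>
  proof -
    have "W \<omega> (n - 1) = real (N1 b \<omega>) - real (N1 a \<omega>)"
      unfolding W_def D_def using tsn1 tsn n1 by simp
    then show ?thesis unfolding \<psi>_def
      by (metis floor_of_int of_int_diff of_int_of_nat_eq)
  qed
  have int\<phi>: "integrable M (\<phi> \<circ> V)"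
    by (rule integrable_const_bound[where B=1]) (use iv2 indep_var_rv1 in \<open>auto simp: \<phi>_def\<close>)
  have int\<psi>: "integrable M (\<psi> \<circ> W)"
    by (rule integrable_const_bound[where B=B]) (use iv2 indep_var_rv2 in \<open>auto simp: \<psi>_def hb\<close>)
  have Evm: "Ev \<in> sets M" unfolding Ev_def by (rule finite_Ball_sets[OF C(1)]) measurable
  have "(\<integral>\<omega>. indicator Ev \<omega> * h (int (N1 b \<omega>) - int (N1 a \<omega>)) \<partial>M) = (\<integral>\<omega>. (\<phi> \<circ> V) \<omega> * (\<psi> \<circ> W) \<omega> \<partial>M)"
    by (rule Bochner_Integration.integral_cong) (auto simp: eq\<phi> eq\<psi>)
  also have "\<dots> = (\<integral>\<omega>. (\<phi> \<circ> V) \<omega> \<partial>M) * (\<integral>\<omega>. (\<psi> \<circ> W) \<omega> \<partial>M)"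
    by (rule indep_var_lebesgue_integral[OF iv2 int\<phi> int\<psi>])
  also have "(\<integral>\<omega>. (\<phi> \<circ> V) \<omega> \<partial>M) = (\<integral>\<omega>. indicator Ev \<omega> \<partial>M)"
    by (rule Bochner_Integration.integral_cong) (auto simp: eq\<phi>)
  also have "\<dots> = prob Ev" using Evm by simp
  also have "(\<integral>\<omega>. (\<psi> \<circ> W) \<omega> \<partial>M) = expectation (\<lambda>\<omega>. h (int (N1 b \<omega>) - int (N1 a \<omega>)))"
    by (rule Bochner_Integration.integral_cong) (auto simp: eq\<psi>)
  finally show ?thesis .
qed

lemma K:
  fixes h :: "int \<Rightarrow> real"
  assumes C: "finite C" "\<And>c. c \<in> C \<Longrightarrow> 0 \<le> fst c \<and> fst c \<le> a" and ab: "0 \<le> a" "a \<le> b"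
    and hb: "\<And>z. \<bar>h z\<bar> \<le> B"
  shows "(\<integral>\<omega>. indicator {\<omega>\<in>space M. \<forall>c\<in>C. N1 (fst c) \<omega> = snd c} \<omega> * h (int (N1 b \<omega>) - int (N1 a \<omega>)) \<partial>M)
       = prob {\<omega>\<in>space M. \<forall>c\<in>C. N1 (fst c) \<omega> = snd c} * expectation (\<lambda>\<omega>. h (int (N1 b \<omega>) - int (N1 a \<omega>)))"
proof (cases "a = b")
  case True
  have Evm: "{\<omega>\<in>space M. \<forall>c\<in>C. N1 (fst c) \<omega> = snd c} \<in> sets M" by (rule finite_Ball_sets[OF C(1)]) measurable
  show ?thesis using True Evm by (simp add: prob_space)
next
  case False
  have lt: "a < b" using ab False by simp
  show ?thesis by (rule K_lt[OF C ab(1) lt hb])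
qed

definition "Pis s = {A. \<exists>T E C. finite T \<and> T \<subseteq> {0..} \<and> E \<in> sets (PiM T (\<lambda>_. borel :: real measure)) \<and>
   finite C \<and> fst ` C \<subseteq> {0..s} \<and> A = {\<omega>\<in>space M. (\<lambda>i\<in>T. Y i \<omega>) \<in> E \<and> (\<forall>c\<in>C. Na (fst c) \<omega> = snd c)}}"

lemma Pis_sets: "Pis s \<subseteq> sets M"
proof
  fix A assume "A \<in> Pis s"
  then obtain T E C where TEC: "finite T" "T \<subseteq> {0..}" "E \<in> sets (PiM T (\<lambda>_. borel :: real measure))"
    "finite C" "A = {\<omega>\<in>space M. (\<lambda>i\<in>T. Y i \<omega>) \<in> E \<and> (\<forall>c\<in>C. Na (fst c) \<omega> = snd c)}"
    unfolding Pis_def by blast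
  have "{\<omega>\<in>space M. (\<lambda>i\<in>T. Y i \<omega>) \<in> E} \<in> sets M" using TEC(3) by measurable
  moreover have "{\<omega>\<in>space M. \<forall>c\<in>C. Na (fst c) \<omega> = snd c} \<in> sets M"
    by (rule finite_Ball_sets[OF TEC(4)]) measurable
  ultimately have "{\<omega>\<in>space M. (\<lambda>i\<in>T. Y i \<omega>) \<in> E} \<inter> {\<omega>\<in>space M. \<forall>c\<in>C. Na (fst c) \<omega> = snd c} \<in> sets M" by auto
  moreover have "A = {\<omega>\<in>space M. (\<lambda>i\<in>T. Y i \<omega>) \<in> E} \<inter> {\<omega>\<in>space M. \<forall>c\<in>C. Na (fst c) \<omega> = snd c}"
    using TEC(5) by auto
  ultimately show "A \<in> sets M" by simp
qed

lemma Pis_space: "space M \<in> Pis s"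
proof -
  have "space M = {\<omega>\<in>space M. (\<lambda>i\<in>{}. Y i \<omega>) \<in> space (PiM {} (\<lambda>_. borel :: real measure)) \<and> (\<forall>c\<in>{}. Na (fst c) \<omega> = snd c)}"
    by (auto simp: space_PiM)
  then show ?thesis unfolding Pis_def
    by (intro CollectI exI[of _ "{}"] exI[of _ "space (PiM {} (\<lambda>_. borel :: real measure))"] exI[of _ "{}:: (real \<times> nat) set"]) auto
qed

lemma Pis_Int: "Int_stable (Pis s)"
proof (rule Int_stableI)
  fix A1 A2 assume "A1 \<in> Pis s" "A2 \<in> Pis s"
  then obtain T1 E1 C1 T2 E2 C2 where 1: "finite T1" "T1 \<subseteq> {0..}" "E1 \<in> sets (PiM T1 (\<lambda>_. borel :: real measure))"
    "finite C1" "fst ` C1 \<subseteq> {0..s}" "A1 = {\<omega>\<in>space M. (\<lambda>i\<in>T1. Y i \<omega>) \<in> E1 \<and> (\<forall>c\<in>C1. Na (fst c) \<omega> = snd c)}"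
    and 2: "finite T2" "T2 \<subseteq> {0..}" "E2 \<in> sets (PiM T2 (\<lambda>_. borel :: real measure))"
    "finite C2" "fst ` C2 \<subseteq> {0..s}" "A2 = {\<omega>\<in>space M. (\<lambda>i\<in>T2. Y i \<omega>) \<in> E2 \<and> (\<forall>c\<in>C2. Na (fst c) \<omega> = snd c)}"
    unfolding Pis_def by blast
  define E where "E = {f \<in> space (PiM (T1 \<union> T2) (\<lambda>_. borel :: real measure)). restrict f T1 \<in> E1 \<and> restrict f T2 \<in> E2}"
  have r1: "(\<lambda>f. restrict f T1) \<in> measurable (PiM (T1 \<union> T2) (\<lambda>_. borel :: real measure)) (PiM T1 (\<lambda>_. borel))"
    by (rule measurable_restrict_subset) auto
  have r2: "(\<lambda>f. restrict f T2) \<in> measurable (PiM (T1 \<union> T2) (\<lambda>_. borel :: real measure)) (PiM T2 (\<lambda>_. borel))"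
    by (rule measurable_restrict_subset) auto
  have "E = ((\<lambda>f. restrict f T1) -` E1 \<inter> space (PiM (T1 \<union> T2) (\<lambda>_. borel :: real measure))) \<inter>
            ((\<lambda>f. restrict f T2) -` E2 \<inter> space (PiM (T1 \<union> T2) (\<lambda>_. borel :: real measure)))"
    unfolding E_def by auto
  then have Em: "E \<in> sets (PiM (T1 \<union> T2) (\<lambda>_. borel :: real measure))"
    using measurable_sets[OF r1 1(3)] measurable_sets[OF r2 2(3)] by auto
  have "A1 \<inter> A2 = {\<omega>\<in>space M. (\<lambda>i\<in>T1 \<union> T2. Y i \<omega>) \<in> E \<and> (\<forall>c\<in>C1 \<union> C2. Na (fst c) \<omega> = snd c)}"
  proof -
    have rr: "restrict (\<lambda>i\<in>T1 \<union> T2. Y i \<omega>) T1 = (\<lambda>i\<in>T1. Y i \<omega>)" "restrict (\<lambda>i\<in>T1 \<union> T2. Y i \<omega>) T2 = (\<lambda>i\<in>T2. Y i \<omega>)"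
      "(\<lambda>i\<in>T1 \<union> T2. Y i \<omega>) \<in> space (PiM (T1 \<union> T2) (\<lambda>_. borel :: real measure))" for \<omega>
      by (auto simp: fun_eq_iff space_PiM)
    show ?thesis unfolding 1(6) 2(6) E_def using rr by auto
  qed
  then show "A1 \<inter> A2 \<in> Pis s" unfolding Pis_def mem_Collect_eq using 1 2 Em
    by (intro exI[of _ "T1 \<union> T2"] exI[of _ E] exI[of _ "C1 \<union> C2"]) auto
qed

lemma Pis_gen: assumes s: "0 \<le> s" shows "sets (F s) \<subseteq> sigma_sets (space M) (Pis s)"
proof -
  have PP: "Pis s \<subseteq> Pow (space M)" using Pis_sets sets.sets_into_space by blast
  have Y1: "Y i -` B \<inter> space M \<in> Pis s" if "0 \<le> i" "B \<in> sets borel" for i B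
  proof -
    define E where "E = (\<lambda>f. f i) -` B \<inter> space (PiM {i} (\<lambda>_. borel :: real measure))"
    have "(\<lambda>f. f i) \<in> borel_measurable (PiM {i} (\<lambda>_. borel :: real measure))"
      by (rule measurable_component_singleton) simp
    then have Em: "E \<in> sets (PiM {i} (\<lambda>_. borel :: real measure))" unfolding E_def by (rule measurable_sets[OF _ that(2)])
    have eq: "Y i -` B \<inter> space M = {\<omega>\<in>space M. (\<lambda>j\<in>{i}. Y j \<omega>) \<in> E \<and> (\<forall>c\<in>{}. Na (fst c) \<omega> = snd c)}"
    proof (intro set_eqI)
      fix \<omega>
      have "(\<lambda>j\<in>{i}. Y j \<omega>) \<in> space (PiM {i} (\<lambda>_. borel :: real measure))" by (simp add: space_PiM)
      then show "\<omega> \<in> Y i -` B \<inter> space M \<longleftrightarrow> \<omega> \<in> {\<omega>\<in>space M. (\<lambda>j\<in>{i}. Y j \<omega>) \<in> E \<and> (\<forall>c\<in>{}. Na (fst c) \<omega> = snd c)}"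
        unfolding E_def by (simp add: conj_commute)
    qed
    show ?thesis unfolding Pis_def mem_Collect_eq
    proof (rule exI[of _ "{i}"], rule exI[of _ E], rule exI[of _ "{} :: (real \<times> nat) set"], intro conjI)
      show "Y i -` B \<inter> space M = {\<omega>\<in>space M. (\<lambda>j\<in>{i}. Y j \<omega>) \<in> E \<and> (\<forall>c\<in>{}. Na (fst c) \<omega> = snd c)}" by (rule eq)
    qed (use that Em in simp_all)
  qed
  have Na1: "{\<omega>\<in>space M. Na r \<omega> = k} \<in> Pis s" if "0 \<le> r" "r \<le> s" for r k
  proof -
    have eq: "{\<omega>\<in>space M. Na r \<omega> = k} = {\<omega>\<in>space M. (\<lambda>j\<in>{}. Y j \<omega>) \<in> space (PiM {} (\<lambda>_. borel :: real measure)) \<and> (\<forall>c\<in>{(r,k)}. Na (fst c) \<omega> = snd c)}"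
    proof -
      have "(\<lambda>j\<in>{}. Y j \<omega>) \<in> space (PiM {} (\<lambda>_. borel :: real measure))" for \<omega> by (simp add: space_PiM restrict_def)
      then show ?thesis by simp
    qed
    show ?thesis unfolding Pis_def mem_Collect_eq
    proof (rule exI[of _ "{}"], rule exI[of _ "space (PiM {} (\<lambda>_. borel :: real measure))"], rule exI[of _ "{(r,k)}"], intro conjI)
      show "{\<omega>\<in>space M. Na r \<omega> = k} = {\<omega>\<in>space M. (\<lambda>j\<in>{}. Y j \<omega>) \<in> space (PiM {} (\<lambda>_. borel :: real measure)) \<and> (\<forall>c\<in>{(r,k)}. Na (fst c) \<omega> = snd c)}" by (rule eq)
    qed (use that in simp_all)
  qed
  have Na2: "Na r -` B \<inter> space M \<in> sigma_sets (space M) (Pis s)" if "0 \<le> r" "r \<le> s" for r B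
  proof -
    have "Na r -` B \<inter> space M = (\<Union>k. if k \<in> B then {\<omega>\<in>space M. Na r \<omega> = k} else {})" by auto
    also have "\<dots> \<in> sigma_sets (space M) (Pis s)"
      proof (rule sigma_sets.Union)
      fix k show "(if k \<in> B then {\<omega>\<in>space M. Na r \<omega> = k} else {}) \<in> sigma_sets (space M) (Pis s)"
        using sigma_sets.Basic[OF Na1[OF that]] by (simp add: sigma_sets.Empty)
    qed
    finally show ?thesis .
  qed
  have "sets GY \<subseteq> sigma_sets (space M) (Pis s)"
    unfolding gen_sigma_sets
  proof (rule sigma_algebra.sigma_sets_subset[OF sigma_algebra_sigma_sets[OF PP]], rule subsetI)
    fix x assume "x \<in> {Y i -` B \<inter> space M | i B. i \<in> {0..} \<and> B \<in> sets borel}"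
    then obtain i B where "x = Y i -` B \<inter> space M" "0 \<le> i" "B \<in> sets borel" by auto
    then show "x \<in> sigma_sets (space M) (Pis s)" using sigma_sets.Basic[OF Y1] by auto
  qed
  moreover have "sets (GNa s) \<subseteq> sigma_sets (space M) (Pis s)"
    unfolding gen_sigma_sets
  proof (rule sigma_algebra.sigma_sets_subset[OF sigma_algebra_sigma_sets[OF PP]], rule subsetI)
    fix x assume "x \<in> {Na i -` B \<inter> space M | i B. i \<in> {0..s} \<and> B \<in> sets (count_space UNIV)}"
    then obtain i B where "x = Na i -` B \<inter> space M" "0 \<le> i" "i \<le> s" by auto
    then show "x \<in> sigma_sets (space M) (Pis s)" using Na2 by auto
  qed
  ultimately show ?thesis unfolding F_sets
    by (intro sigma_algebra.sigma_sets_subset[OF sigma_algebra_sigma_sets[OF PP]]) (rule Un_least)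
qed

abbreviation "Sp T' \<equiv> PiM T' (\<lambda>_. borel :: real measure)"

lemma N1_GN[measurable]: "0 \<le> q \<Longrightarrow> N1 q \<in> measurable GN (count_space UNIV)"
  by (rule gen_sigma_meas) auto

lemma N1y_meas:
  assumes "r \<in> T'"
  shows "(\<lambda>p. N1 (Lam (fst p r)) (snd p)) \<in> measurable (Sp T' \<Otimes>\<^sub>M GN) (count_space UNIV)"
proof (rule N1_comp_meas[where x="\<lambda>p. Lam (fst p r)" and w=snd])
  have "(\<lambda>p. fst p r) \<in> borel_measurable (Sp T' \<Otimes>\<^sub>M GN)"
    by (rule measurable_compose[OF measurable_fst measurable_component_singleton]) (rule assms)
  then show "(\<lambda>p. Lam (fst p r)) \<in> borel_measurable (Sp T' \<Otimes>\<^sub>M GN)" by measurable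
  show "0 \<le> Lam (fst z r)" for z by (rule Lam_nonneg)
  show "snd z \<in> space M" if "z \<in> space (Sp T' \<Otimes>\<^sub>M GN)" for z using that by (auto simp: space_pair_measure)
  show "(\<lambda>z. N1 q (snd z)) \<in> measurable (Sp T' \<Otimes>\<^sub>M GN) (count_space UNIV)" if "0 < q" for q
    by (rule measurable_compose[OF measurable_snd N1_GN]) (use that in simp)
qed

lemma id_GN: "(\<lambda>\<omega>. \<omega>) \<in> measurable M GN"
proof (rule measurableI)
  show "x \<in> space M \<Longrightarrow> x \<in> space GN" for x by simp
  fix B assume "B \<in> sets GN"
  then show "(\<lambda>\<omega>. \<omega>) -` B \<inter> space M \<in> sets M" using GN_sub by auto
qed

lemma core_int:
  fixes h :: "int \<Rightarrow> real" and G :: "real \<Rightarrow> real"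
  assumes hb: "\<And>z. \<bar>h z\<bar> \<le> B" and Gm[measurable]: "G \<in> borel_measurable borel"
    and Gb: "\<And>x. \<bar>G x\<bar> \<le> B"
    and HG: "\<And>a b. 0 \<le> a \<Longrightarrow> a \<le> b \<Longrightarrow> expectation (\<lambda>\<omega>. h (int (N1 b \<omega>) - int (N1 a \<omega>))) = G (b - a)"
    and st: "0 \<le> s" "s \<le> t" and A: "A \<in> Pis s"
  shows "(\<integral>\<omega>\<in>A. h (int (Na t \<omega>) - int (Na s \<omega>)) \<partial>M) = (\<integral>\<omega>\<in>A. G (Lm t \<omega> - Lm s \<omega>) \<partial>M)"
proof -
  obtain T E C where TEC: "finite T" "T \<subseteq> {0..}" "E \<in> sets (Sp T)"
    "finite C" "fst ` C \<subseteq> {0..s}" and Aeq: "A = {\<omega>\<in>space M. (\<lambda>i\<in>T. Y i \<omega>) \<in> E \<and> (\<forall>c\<in>C. Na (fst c) \<omega> = snd c)}"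
    using A unfolding Pis_def by blast
  define T' where "T' = T \<union> fst ` C \<union> {s, t}"
  have T': "finite T'" "T' \<subseteq> {0..}" "T \<subseteq> T'" "fst ` C \<subseteq> T'" "s \<in> T'" "t \<in> T'"
    using TEC st unfolding T'_def by auto
  define \<Phi> where "\<Phi> \<omega> = (\<lambda>i\<in>T'. Y i \<omega>)" for \<omega>
  have \<Phi>m[measurable]: "\<Phi> \<in> measurable M (Sp T')" unfolding \<Phi>_def by measurable
  have \<Phi>GY: "\<Phi> \<in> measurable GY (Sp T')" unfolding \<Phi>_def
    by (rule measurable_restrict) (use T'(2) Y_GY in auto)
  define F1 where "F1 y \<omega> = (if restrict y T \<in> E \<and> (\<forall>c\<in>C. N1 (Lam (y (fst c))) \<omega> = snd c)
      then h (int (N1 (Lam (y t)) \<omega>) - int (N1 (Lam (y s)) \<omega>)) else 0)" for y \<omega>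
  define F2 where "F2 y \<omega> = (if restrict y T \<in> E \<and> (\<forall>c\<in>C. N1 (Lam (y (fst c))) \<omega> = snd c)
      then G (Lam (y t) - Lam (y s)) else 0)" for y \<omega>
  define SS where "SS = {p \<in> space (Sp T' \<Otimes>\<^sub>M GN). restrict (fst p) T \<in> E \<and> (\<forall>c\<in>C. N1 (Lam (fst p (fst c))) (snd p) = snd c)}"
  have SSm: "SS \<in> sets (Sp T' \<Otimes>\<^sub>M GN)"
  proof -
    have r: "(\<lambda>p. restrict (fst p) T) \<in> measurable (Sp T' \<Otimes>\<^sub>M GN) (Sp T)"
      by (rule measurable_compose[OF measurable_fst measurable_restrict_subset]) (rule T'(3))
    have 1: "{p \<in> space (Sp T' \<Otimes>\<^sub>M GN). restrict (fst p) T \<in> E} \<in> sets (Sp T' \<Otimes>\<^sub>M GN)"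
      using measurable_sets[OF r TEC(3)] by (simp add: vimage_def Int_def conj_commute)
    have 2: "{p \<in> space (Sp T' \<Otimes>\<^sub>M GN). \<forall>c\<in>C. N1 (Lam (fst p (fst c))) (snd p) = snd c} \<in> sets (Sp T' \<Otimes>\<^sub>M GN)"
    proof (rule finite_Ball_sets[OF TEC(4)])
      fix c assume "c \<in> C"
      then have "fst c \<in> T'" using T'(4) by auto
      from measurable_sets[OF N1y_meas[OF this], of "{snd c}"]
      show "{p \<in> space (Sp T' \<Otimes>\<^sub>M GN). N1 (Lam (fst p (fst c))) (snd p) = snd c} \<in> sets (Sp T' \<Otimes>\<^sub>M GN)"
        by (simp add: vimage_def Int_def conj_commute)
    qed
    have "SS = {p \<in> space (Sp T' \<Otimes>\<^sub>M GN). restrict (fst p) T \<in> E} \<inter> {p \<in> space (Sp T' \<Otimes>\<^sub>M GN). \<forall>c\<in>C. N1 (Lam (fst p (fst c))) (snd p) = snd c}"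
      unfolding SS_def by auto
    then show ?thesis using 1 2 by simp
  qed
  have F1m: "(\<lambda>p. F1 (fst p) (snd p)) \<in> borel_measurable (Sp T' \<Otimes>\<^sub>M GN)"
  proof -
    have "(\<lambda>p. h (int (N1 (Lam (fst p t)) (snd p)) - int (N1 (Lam (fst p s)) (snd p)))) \<in> borel_measurable (Sp T' \<Otimes>\<^sub>M GN)"
      by (rule hdiff_meas[OF N1y_meas N1y_meas]) (use T' in auto)
    then have "(\<lambda>p. if p \<in> SS then h (int (N1 (Lam (fst p t)) (snd p)) - int (N1 (Lam (fst p s)) (snd p))) else 0) \<in> borel_measurable (Sp T' \<Otimes>\<^sub>M GN)"
      using SSm by (intro measurable_If_set) auto
    then show ?thesis
      by (rule measurable_cong[THEN iffD1, rotated]) (auto simp: F1_def SS_def)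
  qed
  have F2m: "(\<lambda>p. F2 (fst p) (snd p)) \<in> borel_measurable (Sp T' \<Otimes>\<^sub>M GN)"
  proof -
    have ct: "(\<lambda>p. fst p t) \<in> borel_measurable (Sp T' \<Otimes>\<^sub>M GN)"
      by (rule measurable_compose[OF measurable_fst measurable_component_singleton]) (rule T')
    have cs: "(\<lambda>p. fst p s) \<in> borel_measurable (Sp T' \<Otimes>\<^sub>M GN)"
      by (rule measurable_compose[OF measurable_fst measurable_component_singleton]) (rule T')
    have "(\<lambda>p. G (Lam (fst p t) - Lam (fst p s))) \<in> borel_measurable (Sp T' \<Otimes>\<^sub>M GN)"
      using ct cs by measurable
    then have "(\<lambda>p. if p \<in> SS then G (Lam (fst p t) - Lam (fst p s)) else 0) \<in> borel_measurable (Sp T' \<Otimes>\<^sub>M GN)"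
      using SSm by (intro measurable_If_set) auto
    then show ?thesis
      by (rule measurable_cong[THEN iffD1, rotated]) (auto simp: F2_def SS_def)
  qed
  have B0: "0 \<le> B" using hb[of 0] by linarith
  have F1b: "\<bar>F1 y \<omega>\<bar> \<le> B" for y \<omega> using B0 hb unfolding F1_def by auto
  have F2b: "\<bar>F2 y \<omega>\<bar> \<le> B" for y \<omega> using B0 Gb unfolding F2_def by auto
  have ind: "measure M (\<Phi> -` A' \<inter> (\<lambda>\<omega>. \<omega>) -` B' \<inter> space M) = measure M (\<Phi> -` A' \<inter> space M) * measure M ((\<lambda>\<omega>. \<omega>) -` B' \<inter> space M)"
    if "A' \<in> sets (Sp T')" "B' \<in> sets GN" for A' B'
  proof -
    have a: "\<Phi> -` A' \<inter> space M \<in> sets GY" using measurable_sets[OF \<Phi>GY that(1)] by simp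
    have bsub: "B' \<subseteq> space M" using sets.sets_into_space[OF that(2)] by simp
    have "measure M ((\<Phi> -` A' \<inter> space M) \<inter> B') = measure M (\<Phi> -` A' \<inter> space M) * measure M B'"
      by (rule indep_setD[OF indep a that(2)])
    moreover have "\<Phi> -` A' \<inter> (\<lambda>\<omega>. \<omega>) -` B' \<inter> space M = (\<Phi> -` A' \<inter> space M) \<inter> B'" using bsub by auto
    moreover have "(\<lambda>\<omega>. \<omega>) -` B' \<inter> space M = B'" using bsub by auto
    ultimately show ?thesis by simp
  qed
  note fub1 = indep_fubini'[OF PS \<Phi>m id_GN ind F1m F1b]
  note fub2 = indep_fubini'[OF PS \<Phi>m id_GN ind F2m F2b]
  note fub1 = indep_fubini'[OF PS \<Phi>m id_GN ind F1m F1b]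
  note fub2 = indep_fubini'[OF PS \<Phi>m id_GN ind F2m F2b]
  have L1: "(\<integral>\<omega>\<in>A. h (int (Na t \<omega>) - int (Na s \<omega>)) \<partial>M) = (\<integral>\<omega>. F1 (\<Phi> \<omega>) \<omega> \<partial>M)"
    unfolding set_lebesgue_integral_def
  proof (rule Bochner_Integration.integral_cong[OF refl])
    fix \<omega> assume \<omega>: "\<omega> \<in> space M"
    have r: "restrict (\<Phi> \<omega>) T = (\<lambda>i\<in>T. Y i \<omega>)" using T'(3) by (auto simp: \<Phi>_def fun_eq_iff)
    have c: "\<And>c. c \<in> C \<Longrightarrow> N1 (Lam (\<Phi> \<omega> (fst c))) \<omega> = Na (fst c) \<omega>" using T'(4) by (auto simp: \<Phi>_def Na_def Lm_def)
    have st': "\<Phi> \<omega> t = Y t \<omega>" "\<Phi> \<omega> s = Y s \<omega>" using T' by (auto simp: \<Phi>_def)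
    have cc: "(\<forall>c\<in>C. N1 (Lam (\<Phi> \<omega> (fst c))) \<omega> = snd c) \<longleftrightarrow> (\<forall>c\<in>C. Na (fst c) \<omega> = snd c)" using c by auto
    have inA: "\<omega> \<in> A \<longleftrightarrow> (\<lambda>i\<in>T. Y i \<omega>) \<in> E \<and> (\<forall>c\<in>C. Na (fst c) \<omega> = snd c)" unfolding Aeq using \<omega> by simp
    have nt: "N1 (Lam (Y t \<omega>)) \<omega> = Na t \<omega>" "N1 (Lam (Y s \<omega>)) \<omega> = Na s \<omega>" by (simp_all add: Na_def Lm_def)
    show "indicator A \<omega> *\<^sub>R h (int (Na t \<omega>) - int (Na s \<omega>)) = F1 (\<Phi> \<omega>) \<omega>"
      unfolding F1_def r st' cc nt by (simp only: inA indicator_def of_bool_def split: if_split) (simp; blast)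
  qed
  have L2: "(\<integral>\<omega>\<in>A. G (Lm t \<omega> - Lm s \<omega>) \<partial>M) = (\<integral>\<omega>. F2 (\<Phi> \<omega>) \<omega> \<partial>M)"
    unfolding set_lebesgue_integral_def
  proof (rule Bochner_Integration.integral_cong[OF refl])
    fix \<omega> assume \<omega>: "\<omega> \<in> space M"
    have r: "restrict (\<Phi> \<omega>) T = (\<lambda>i\<in>T. Y i \<omega>)" using T'(3) by (auto simp: \<Phi>_def fun_eq_iff)
    have c: "\<And>c. c \<in> C \<Longrightarrow> N1 (Lam (\<Phi> \<omega> (fst c))) \<omega> = Na (fst c) \<omega>" using T'(4) by (auto simp: \<Phi>_def Na_def Lm_def)
    have st': "\<Phi> \<omega> t = Y t \<omega>" "\<Phi> \<omega> s = Y s \<omega>" using T' by (auto simp: \<Phi>_def)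
    have cc: "(\<forall>c\<in>C. N1 (Lam (\<Phi> \<omega> (fst c))) \<omega> = snd c) \<longleftrightarrow> (\<forall>c\<in>C. Na (fst c) \<omega> = snd c)" using c by auto
    have inA: "\<omega> \<in> A \<longleftrightarrow> (\<lambda>i\<in>T. Y i \<omega>) \<in> E \<and> (\<forall>c\<in>C. Na (fst c) \<omega> = snd c)" unfolding Aeq using \<omega> by simp
    have nt: "Lam (Y t \<omega>) = Lm t \<omega>" "Lam (Y s \<omega>) = Lm s \<omega>" by (simp_all add: Lm_def)
    show "indicator A \<omega> *\<^sub>R G (Lm t \<omega> - Lm s \<omega>) = F2 (\<Phi> \<omega>) \<omega>"
      unfolding F2_def r st' cc nt by (simp only: inA indicator_def of_bool_def split: if_split) (simp; blast)
  qed
  define DN where "DN = distr M GN (\<lambda>\<omega>. \<omega>)"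
  define Q1 where "Q1 = (\<lambda>y. \<integral>z. F1 y z \<partial>DN)"
  define Q2 where "Q2 = (\<lambda>y. \<integral>z. F2 y z \<partial>DN)" 
  have e: "measurable (distr M (Sp T') \<Phi>) borel = measurable (Sp T') (borel :: real measure)"
    by (rule measurable_cong_sets[OF sets_distr refl])
  have Q1m': "Q1 \<in> borel_measurable (Sp T')" using fub1(2) by (simp only: Q1_def DN_def)
  have Q2m': "Q2 \<in> borel_measurable (Sp T')" using fub2(2) by (simp only: Q2_def DN_def)
  have Q1m: "Q1 \<in> borel_measurable (distr M (Sp T') \<Phi>)"
    using Q1m' by (simp only: e)
  have Q2m: "Q2 \<in> borel_measurable (distr M (Sp T') \<Phi>)"
    using Q2m' by (simp only: e)
  define Mono where "Mono y \<longleftrightarrow> (\<forall>c\<in>T' \<times> T'. fst c \<le> snd c \<longrightarrow> y (fst c) \<le> y (snd c))" for y :: "real \<Rightarrow> real"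
  have Monom: "{y \<in> space (Sp T'). Mono y} \<in> sets (Sp T')"
    unfolding Mono_def
  proof (rule finite_Ball_sets)
    show "finite (T' \<times> T')" using T'(1) by simp
    fix c assume c: "c \<in> T' \<times> T'"
    have m1: "(\<lambda>y. y (fst c)) \<in> borel_measurable (Sp T')" using c by (intro measurable_component_singleton) auto
    have m2: "(\<lambda>y. y (snd c)) \<in> borel_measurable (Sp T')" using c by (intro measurable_component_singleton) auto
    show "{y \<in> space (Sp T'). fst c \<le> snd c \<longrightarrow> y (fst c) \<le> y (snd c)} \<in> sets (Sp T')"
    proof (cases "fst c \<le> snd c")
      case True then show ?thesis using borel_measurable_le[OF m1 m2] by simp
    qed simp
  qed
  have AEmono: "AE y in distr M (Sp T') \<Phi>. Mono y"
  proof (subst AE_distr_iff[OF \<Phi>m Monom])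
    show "AE \<omega> in M. Mono (\<Phi> \<omega>)"
      using Good_AE
    proof eventually_elim
      fix \<omega> assume "Good \<omega>"
      then show "Mono (\<Phi> \<omega>)" unfolding Mono_def \<Phi>_def by (auto intro: Y_mono)
    qed
  qed
  have QQ: "Q1 y = Q2 y" if y: "y \<in> space (Sp T')" and mono: "Mono y" for y
  proof -
    have F1y: "F1 y \<in> borel_measurable GN" using measurable_Pair2[OF F1m y] by simp
    have F2y: "F2 y \<in> borel_measurable GN" using measurable_Pair2[OF F2m y] by simp
    have q1: "Q1 y = (\<integral>\<omega>. F1 y \<omega> \<partial>M)" unfolding Q1_def DN_def
      by (subst integral_distr[OF id_GN F1y]) simp
    have q2: "Q2 y = (\<integral>\<omega>. F2 y \<omega> \<partial>M)" unfolding Q2_def DN_def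
      by (subst integral_distr[OF id_GN F2y]) simp
    show ?thesis
    proof (cases "restrict y T \<in> E")
      case False
      then show ?thesis unfolding q1 q2 F1_def F2_def by simp
    next
      case True
      define C' where "C' = (\<lambda>c. (Lam (y (fst c)), snd c)) ` C"
      define a where "a = Lam (y s)"
      define b where "b = Lam (y t)"
      define Ev where "Ev = {\<omega>\<in>space M. \<forall>c\<in>C'. N1 (fst c) \<omega> = snd c}"
      have mono': "y i \<le> y j" if "i \<in> T'" "j \<in> T'" "i \<le> j" for i j
        using mono that unfolding Mono_def by auto
      have C': "finite C'" "\<And>c. c \<in> C' \<Longrightarrow> 0 \<le> fst c \<and> fst c \<le> a"
      proof -
        show "finite C'" using TEC(4) unfolding C'_def by simp
        fix c assume "c \<in> C'"
        then obtain c0 where c0: "c0 \<in> C" "c = (Lam (y (fst c0)), snd c0)" unfolding C'_def by auto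
        have "fst c0 \<in> T'" "fst c0 \<le> s" using c0 T'(4) TEC(5) by auto
        then have "y (fst c0) \<le> y s" using mono' T'(5) by auto
        then show "0 \<le> fst c \<and> fst c \<le> a" using c0 Lam_nonneg Lam_mono unfolding a_def by auto
      qed
      have ab: "0 \<le> a" "a \<le> b" unfolding a_def b_def using Lam_nonneg Lam_mono mono' T' st by auto
      have evq: "(\<forall>c\<in>C. N1 (Lam (y (fst c))) \<omega> = snd c) \<longleftrightarrow> (\<forall>c\<in>C'. N1 (fst c) \<omega> = snd c)" for \<omega>
        unfolding C'_def by auto
      have "(\<integral>\<omega>. F1 y \<omega> \<partial>M) = (\<integral>\<omega>. indicator Ev \<omega> * h (int (N1 b \<omega>) - int (N1 a \<omega>)) \<partial>M)"
        by (rule Bochner_Integration.integral_cong[OF refl]) (simp add: F1_def Ev_def indicator_def evq True a_def b_def)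
      also have "\<dots> = prob Ev * expectation (\<lambda>\<omega>. h (int (N1 b \<omega>) - int (N1 a \<omega>)))"
        unfolding Ev_def by (rule K[OF C' ab hb])
      also have "\<dots> = prob Ev * G (b - a)" using HG[OF ab] by simp
      also have "\<dots> = (\<integral>\<omega>. indicator Ev \<omega> * G (b - a) \<partial>M)"
      proof -
        have "Ev \<in> sets M" unfolding Ev_def by (rule finite_Ball_sets[OF C'(1)]) measurable
        then show ?thesis by simp
      qed
      also have "\<dots> = (\<integral>\<omega>. F2 y \<omega> \<partial>M)"
        by (rule Bochner_Integration.integral_cong[OF refl]) (simp add: F2_def Ev_def indicator_def evq True a_def b_def)
      finally show ?thesis unfolding q1 q2 .
    qed
  qed
  have "(\<integral>y. Q1 y \<partial>distr M (Sp T') \<Phi>) = (\<integral>y. Q2 y \<partial>distr M (Sp T') \<Phi>)"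
  proof (rule integral_cong_AE[OF Q1m Q2m])
    show "AE y in distr M (Sp T') \<Phi>. Q1 y = Q2 y"
      using AEmono AE_space by eventually_elim (auto intro: QQ)
  qed
  then show ?thesis using L1 L2 fub1(1) fub2(1) by (simp only: Q1_def Q2_def DN_def)
qed

lemma core:
  fixes h :: "int \<Rightarrow> real" and G :: "real \<Rightarrow> real"
  assumes hb: "\<And>z. \<bar>h z\<bar> \<le> B" and Gm[measurable]: "G \<in> borel_measurable borel"
    and Gb: "\<And>x. 0 \<le> x \<Longrightarrow> \<bar>G x\<bar> \<le> B"
    and HG: "\<And>a b. 0 \<le> a \<Longrightarrow> a \<le> b \<Longrightarrow> expectation (\<lambda>\<omega>. h (int (N1 b \<omega>) - int (N1 a \<omega>))) = G (b - a)"
    and st: "0 \<le> s" "s \<le> t"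
  shows "AE \<omega> in M. real_cond_exp M (F s) (\<lambda>\<omega>. h (int (Na t \<omega>) - int (Na s \<omega>))) \<omega> = G (Lm t \<omega> - Lm s \<omega>)"
proof -
  define G' where "G' x = (if 0 \<le> x then G x else 0)" for x
  have G'm[measurable]: "G' \<in> borel_measurable borel" unfolding G'_def by measurable
  have B0: "0 \<le> B" using hb[of 0] by linarith
  have G'b: "\<bar>G' x\<bar> \<le> B" for x using Gb B0 by (simp add: G'_def)
  have HG': "expectation (\<lambda>\<omega>. h (int (N1 b \<omega>) - int (N1 a \<omega>))) = G' (b - a)" if "0 \<le> a" "a \<le> b" for a b
    using HG[OF that] that by (simp add: G'_def)
  have fm: "(\<lambda>\<omega>. h (int (Na t \<omega>) - int (Na s \<omega>))) \<in> borel_measurable M"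
    by (rule hdiff_meas[OF Na_meas Na_meas])
  have gF: "(\<lambda>\<omega>. G' (Lm t \<omega> - Lm s \<omega>)) \<in> borel_measurable (F s)"
  proof -
    have "(\<lambda>\<omega>. Lm t \<omega> - Lm s \<omega>) \<in> borel_measurable (F s)"
      using Lm_F[of t s] Lm_F[of s s] st by (intro borel_measurable_diff) auto
    then show ?thesis by (rule measurable_compose) (rule G'm)
  qed
  have AE1: "AE \<omega> in M. real_cond_exp M (F s) (\<lambda>\<omega>. h (int (Na t \<omega>) - int (Na s \<omega>))) \<omega> = G' (Lm t \<omega> - Lm s \<omega>)"
  proof (rule cond_exp_pi[OF PS F_subalg Pis_Int Pis_sets Pis_space Pis_gen[OF st(1)]])
    show "integrable M (\<lambda>\<omega>. h (int (Na t \<omega>) - int (Na s \<omega>)))"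
      by (rule integrable_const_bound[where B=B]) (use fm hb in auto)
    show "integrable M (\<lambda>\<omega>. G' (Lm t \<omega> - Lm s \<omega>))"
      by (rule integrable_const_bound[where B=B]) (use G'b in auto)
    show "(\<lambda>\<omega>. G' (Lm t \<omega> - Lm s \<omega>)) \<in> borel_measurable (F s)" by (rule gF)
    fix A assume "A \<in> Pis s"
    then show "(\<integral>\<omega>\<in>A. h (int (Na t \<omega>) - int (Na s \<omega>)) \<partial>M) = (\<integral>\<omega>\<in>A. G' (Lm t \<omega> - Lm s \<omega>) \<partial>M)"
      using core_int[OF hb G'm G'b HG' st] by blast
  qed
  have AE2: "AE \<omega> in M. G' (Lm t \<omega> - Lm s \<omega>) = G (Lm t \<omega> - Lm s \<omega>)"
    using Good_AE
  proof eventually_elim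
    fix \<omega> assume "Good \<omega>"
    then have "Lm s \<omega> \<le> Lm t \<omega>" using st by (intro Lm_mono)
    then show "G' (Lm t \<omega> - Lm s \<omega>) = G (Lm t \<omega> - Lm s \<omega>)" by (simp add: G'_def)
  qed
  from AE1 AE2 show ?thesis by eventually_elim simp
qed

lemma poisson_sums: "(\<lambda>k. x ^ k / fact k * exp (- x)) sums (1::real)"
proof -
  have "(\<lambda>k. x ^ k /\<^sub>R fact k) sums exp x" by (rule exp_converges)
  then have "(\<lambda>k. x ^ k / fact k * exp (- x)) sums (exp x * exp (- x))"
    by (intro sums_mult2) (simp add: divide_inverse_commute)
  then show ?thesis by (simp add: exp_minus)
qed

lemma E_incr:
  fixes h :: "int \<Rightarrow> real"
  assumes ab: "0 \<le> a" "a \<le> b" and hb: "\<And>z. \<bar>h z\<bar> \<le> B"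
  shows "expectation (\<lambda>\<omega>. h (int (N1 b \<omega>) - int (N1 a \<omega>))) = (\<Sum>k. h (int k) * ((b - a) ^ k / fact k * exp (- (b - a))))"
proof -
  define p where "p k = (b - a) ^ k / fact k * exp (- (b - a))" for k :: nat
  define X where "X \<omega> = N1 b \<omega> - N1 a \<omega>" for \<omega>
  define E where "E k = {\<omega>\<in>space M. X \<omega> = k}" for k
  have Xm[measurable]: "X \<in> measurable M (count_space UNIV)" unfolding X_def by measurable
  have Em[measurable]: "E k \<in> sets M" for k unfolding E_def by measurable
  have pE: "prob (E k) = p k" for k unfolding E_def X_def p_def using N1_dist[OF ab] by simp
  have psum: "p sums 1" unfolding p_def by (rule poisson_sums)
  have B0: "0 \<le> B" using hb[of 0] by linarith
  have pnn: "0 \<le> p k" for k unfolding p_def using ab by simp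
  have single: "(\<lambda>k. h (int k) * indicator (E k) \<omega>) = (\<lambda>k. if k = X \<omega> then h (int k) else 0)" if "\<omega> \<in> space M" for \<omega>
    using that by (auto simp: E_def indicator_def fun_eq_iff)
  have pw: "h (int (N1 b \<omega>) - int (N1 a \<omega>)) = (\<Sum>k. h (int k) * indicator (E k) \<omega>)" if \<omega>: "\<omega> \<in> space M" for \<omega>
  proof -
    have "N1 a \<omega> \<le> N1 b \<omega>" using N1_mono[OF \<omega> ab] .
    then have "int (N1 b \<omega>) - int (N1 a \<omega>) = int (X \<omega>)" unfolding X_def by simp
    moreover have "(\<Sum>k. h (int k) * indicator (E k) \<omega>) = h (int (X \<omega>))"
      unfolding single[OF \<omega>] by (rule sums_unique[symmetric]) (rule sums_single)
    ultimately show ?thesis by simp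
  qed
  have "expectation (\<lambda>\<omega>. h (int (N1 b \<omega>) - int (N1 a \<omega>))) = expectation (\<lambda>\<omega>. \<Sum>k. h (int k) * indicator (E k) \<omega>)"
    by (rule Bochner_Integration.integral_cong[OF refl]) (rule pw)
  also have "\<dots> = (\<Sum>k. expectation (\<lambda>\<omega>. h (int k) * indicator (E k) \<omega>))"
  proof (rule integral_suminf)
    show "integrable M (\<lambda>\<omega>. h (int k) * indicator (E k) \<omega>)" for k
      by (rule integrable_const_bound[where B="\<bar>h (int k)\<bar>"]) (auto simp: indicator_def)
    show "AE \<omega> in M. summable (\<lambda>k. norm (h (int k) * indicator (E k) \<omega>))"
    proof (rule AE_I2)
      fix \<omega> assume \<omega>: "\<omega> \<in> space M"
      have "(\<lambda>k. norm (h (int k) * indicator (E k) \<omega>)) = (\<lambda>k. if k = X \<omega> then norm (h (int k)) else 0)"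
        using \<omega> by (auto simp: E_def indicator_def fun_eq_iff)
      then show "summable (\<lambda>k. norm (h (int k) * indicator (E k) \<omega>))"
        using sums_single[of "X \<omega>" "\<lambda>k. norm (h (int k))"] by (simp add: sums_summable)
    qed
    have "(\<integral>\<omega>. norm (h (int k) * indicator (E k) \<omega>) \<partial>M) = \<bar>h (int k)\<bar> * p k" for k
    proof -
      have "(\<integral>\<omega>. norm (h (int k) * indicator (E k) \<omega>) \<partial>M) = (\<integral>\<omega>. \<bar>h (int k)\<bar> * indicator (E k) \<omega> \<partial>M)"
        by (rule Bochner_Integration.integral_cong) (auto simp: indicator_def)
      also have "\<dots> = \<bar>h (int k)\<bar> * p k" using pE[of k] by simp
      finally show ?thesis .
    qed
    moreover have "summable (\<lambda>k. \<bar>h (int k)\<bar> * p k)"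
    proof (rule summable_comparison_test'[where g="\<lambda>k. B * p k" and N=0])
      show "summable (\<lambda>k. B * p k)" using psum by (intro summable_mult sums_summable)
      fix k show "norm (\<bar>h (int k)\<bar> * p k) \<le> B * p k"
        using hb[of "int k"] pnn[of k] by (simp add: abs_mult mult_right_mono)
    qed
    ultimately show "summable (\<lambda>k. \<integral>\<omega>. norm (h (int k) * indicator (E k) \<omega>) \<partial>M)" by simp
  qed
  also have "\<dots> = (\<Sum>k. h (int k) * p k)"
  proof -
    have "expectation (\<lambda>\<omega>. h (int k) * indicator (E k) \<omega>) = h (int k) * p k" for k using pE[of k] by simp
    then show ?thesis by (simp only:)
  qed
  finally show ?thesis unfolding p_def .
qed

lemma Na_eq: "(\<lambda>t \<omega>. N1 (Lam (Y t \<omega>)) \<omega>) = Na"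
  by (simp add: fun_eq_iff Na_def Lm_def)

lemma E_bound:
  fixes h :: "int \<Rightarrow> real"
  assumes hb: "\<And>z. \<bar>h z\<bar> \<le> B"
  shows "\<bar>expectation (\<lambda>\<omega>. h (int (N1 b \<omega>) - int (N1 a \<omega>)))\<bar> \<le> B"
proof -
  have m: "(\<lambda>\<omega>. h (int (N1 b \<omega>) - int (N1 a \<omega>))) \<in> borel_measurable M"
    by (rule hdiff_meas[OF N1_meas N1_meas])
  have int: "integrable M (\<lambda>\<omega>. h (int (N1 b \<omega>) - int (N1 a \<omega>)))"
    by (rule integrable_const_bound[where B=B]) (use m hb in auto)
  have "norm (expectation (\<lambda>\<omega>. h (int (N1 b \<omega>) - int (N1 a \<omega>)))) \<le> expectation (\<lambda>\<omega>. norm (h (int (N1 b \<omega>) - int (N1 a \<omega>))))"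
    by (rule integral_norm_bound)
  also have "\<dots> \<le> expectation (\<lambda>\<omega>. B)"
    by (rule integral_mono) (use int hb in auto)
  also have "\<dots> = B" by (simp add: prob_space)
  finally show ?thesis by simp
qed

lemma cond_poisson:
  assumes st: "0 \<le> s" "s \<le> t"
  shows "AE \<omega> in M. real_cond_exp M (F s) (indicator {\<omega>. int (Na t \<omega>) - int (Na s \<omega>) = int k}) \<omega>
            = (Lm t \<omega> - Lm s \<omega>) ^ k / fact k * exp (- (Lm t \<omega> - Lm s \<omega>))"
proof -
  define h where "h z = (if z = int k then 1 else (0::real))" for z
  have hb: "\<bar>h z\<bar> \<le> 1" for z by (simp add: h_def)
  have ind: "indicator {\<omega>. int (Na t \<omega>) - int (Na s \<omega>) = int k} = (\<lambda>\<omega>. h (int (Na t \<omega>) - int (Na s \<omega>)))"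
    by (simp add: fun_eq_iff h_def indicator_def)
  have HG: "expectation (\<lambda>\<omega>. h (int (N1 b \<omega>) - int (N1 a \<omega>))) = (b - a) ^ k / fact k * exp (- (b - a))"
    if "0 \<le> a" "a \<le> b" for a b
  proof -
    have "(\<lambda>j. h (int j) * ((b - a) ^ j / fact j * exp (- (b - a)))) = (\<lambda>j. if j = k then (b - a) ^ j / fact j * exp (- (b - a)) else 0)"
      by (simp add: fun_eq_iff h_def)
    then have "(\<Sum>j. h (int j) * ((b - a) ^ j / fact j * exp (- (b - a)))) = (b - a) ^ k / fact k * exp (- (b - a))"
      using sums_unique[OF sums_single[of k "\<lambda>j. (b - a) ^ j / fact j * exp (- (b - a))"]] by simp
    then show ?thesis using E_incr[where h=h and B=1, OF that hb] by simp
  qed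
  have Gm: "(\<lambda>x::real. x ^ k / fact k * exp (- x)) \<in> borel_measurable borel" by measurable
  have Gb: "\<bar>x ^ k / fact k * exp (- x)\<bar> \<le> 1" if "0 \<le> x" for x :: real
    using HG[of 0 x] E_bound[where h=h and B=1, OF hb, of x 0] that by simp
  show ?thesis unfolding ind
    by (rule core[where h=h and B=1, OF hb Gm Gb HG st])
qed

lemma cond_cos:
  assumes st: "0 \<le> s" "s \<le> t"
  shows "AE \<omega> in M. real_cond_exp M (F s) (\<lambda>\<omega>. cos (u * (real (Na t \<omega>) - real (Na s \<omega>)))) \<omega>
            = Re (exp (complex_of_real (Lm t \<omega> - Lm s \<omega>) * (exp (\<i> * complex_of_real u) - 1)))"
proof -
  define h where "h z = cos (u * real_of_int z)" for z
  define G where "G x = Re (exp (complex_of_real x * (exp (\<i> * complex_of_real u) - 1)))" for x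
  have hb: "\<bar>h z\<bar> \<le> 1" for z by (simp add: h_def)
  have fe: "(\<lambda>\<omega>. cos (u * (real (Na t \<omega>) - real (Na s \<omega>)))) = (\<lambda>\<omega>. h (int (Na t \<omega>) - int (Na s \<omega>)))"
    by (simp add: fun_eq_iff h_def)
  have HG: "expectation (\<lambda>\<omega>. h (int (N1 b \<omega>) - int (N1 a \<omega>))) = G (b - a)"
    if "0 \<le> a" "a \<le> b" for a b
    using E_incr[where h=h and B=1, OF that hb] sums_unique[OF pois_trig(1)[of u "b - a"]]
    by (simp add: h_def G_def)
  have Gm: "G \<in> borel_measurable borel"
    unfolding G_def by (intro borel_measurable_continuous_onI continuous_intros)
  have Gb: "\<bar>G x\<bar> \<le> 1" if "0 \<le> x" for x :: real
    using HG[of 0 x] E_bound[where h=h and B=1, OF hb, of x 0] that by simp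
  show ?thesis unfolding fe G_def[symmetric]
    by (rule core[where h=h and B=1, OF hb Gm Gb HG st])
qed

lemma cond_sin:
  assumes st: "0 \<le> s" "s \<le> t"
  shows "AE \<omega> in M. real_cond_exp M (F s) (\<lambda>\<omega>. sin (u * (real (Na t \<omega>) - real (Na s \<omega>)))) \<omega>
            = Im (exp (complex_of_real (Lm t \<omega> - Lm s \<omega>) * (exp (\<i> * complex_of_real u) - 1)))"
proof -
  define h where "h z = sin (u * real_of_int z)" for z
  define G where "G x = Im (exp (complex_of_real x * (exp (\<i> * complex_of_real u) - 1)))" for x
  have hb: "\<bar>h z\<bar> \<le> 1" for z by (simp add: h_def)
  have fe: "(\<lambda>\<omega>. sin (u * (real (Na t \<omega>) - real (Na s \<omega>)))) = (\<lambda>\<omega>. h (int (Na t \<omega>) - int (Na s \<omega>)))"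
    by (simp add: fun_eq_iff h_def)
  have HG: "expectation (\<lambda>\<omega>. h (int (N1 b \<omega>) - int (N1 a \<omega>))) = G (b - a)"
    if "0 \<le> a" "a \<le> b" for a b
    using E_incr[where h=h and B=1, OF that hb] sums_unique[OF pois_trig(2)[of u "b - a"]]
    by (simp add: h_def G_def)
  have Gm: "G \<in> borel_measurable borel"
    unfolding G_def by (intro borel_measurable_continuous_onI continuous_intros)
  have Gb: "\<bar>G x\<bar> \<le> 1" if "0 \<le> x" for x :: real
    using HG[of 0 x] E_bound[where h=h and B=1, OF hb, of x 0] that by simp
  show ?thesis unfolding fe G_def[symmetric]
    by (rule core[where h=h and B=1, OF hb Gm Gb HG st])
qed

lemma F_eq: "(\<lambda>s. sigma (space M) (sets GY \<union> sets (gen_sigma M {0..s} (\<lambda>t \<omega>. N1 (Lam (Y t \<omega>)) \<omega>) (count_space UNIV)))) = F"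
  by (simp add: Na_eq F_def fun_eq_iff)

lemma Na_app: "N1 (Lam (Y t \<omega>)) \<omega> = Na t \<omega>" by (simp add: Na_def Lm_def)

lemma F_eq2: "(\<lambda>s. sigma (space M) (sets GY \<union> sets (gen_sigma M {0..s} Na (count_space UNIV)))) = F"
  by (simp add: F_def fun_eq_iff)

lemma F_app: "sigma (space M) (sets GY \<union> sets (gen_sigma M {0..s} Na (count_space UNIV))) = F s"
  by (simp add: F_def)

lemma cox: "cox_process M F Na (\<lambda>t \<omega>. Lam (Y t \<omega>))"
  unfolding cox_process_def
proof (intro conjI allI impI)
  show "subalgebra M (F t)" for t by (rule F_subalg)
  show "sets (F s) \<subseteq> sets (F t)" if "s \<le> t" for s t by (rule F_mono[OF that])
  show "Na t \<in> measurable (F t) (count_space UNIV)" if "0 \<le> t" for t by (rule Na_F[OF that order_refl])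
  show "(\<lambda>\<omega>. Lam (Y t \<omega>)) \<in> borel_measurable (F 0)" if "0 \<le> t" for t
    using Lm_F[OF that, of 0] by (simp add: Lm_def[abs_def])
  show "AE \<omega> in M. \<forall>s t. 0 \<le> s \<longrightarrow> s \<le> t \<longrightarrow> Lam (Y s \<omega>) \<le> Lam (Y t \<omega>)"
    using Good_AE by eventually_elim (auto intro: Lam_mono Y_mono)
  show "AE \<omega> in M. \<forall>t\<ge>0. continuous (at_right t) (\<lambda>s. Lam (Y s \<omega>))"
    using Good_AE by eventually_elim (use Lm_rc in \<open>auto simp: Lm_def\<close>)
  fix s t :: real and k :: nat assume "0 \<le> s" "s \<le> t"
  then show "AE \<omega> in M. real_cond_exp M (F s) (indicator {\<omega>. int (Na t \<omega>) - int (Na s \<omega>) = int k}) \<omega>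
            = (Lam (Y t \<omega>) - Lam (Y s \<omega>)) ^ k / fact k * exp (- (Lam (Y t \<omega>) - Lam (Y s \<omega>)))"
    using cond_poisson[of s t k] by (simp add: Lm_def)
qed

lemma main_loc: "cox_process M F Na (\<lambda>t \<omega>. Lam (Y t \<omega>)) \<and>
       (\<forall>s t u. 0 \<le> s \<longrightarrow> s \<le> t \<longrightarrow>
          (AE \<omega> in M. real_cond_exp M (F s)
                (\<lambda>\<omega>. cos (u * (real (Na t \<omega>) - real (Na s \<omega>)))) \<omega>
              = Re (exp (complex_of_real (Lam (Y t \<omega>) - Lam (Y s \<omega>)) * (exp (\<i> * complex_of_real u) - 1)))) \<and>
          (AE \<omega> in M. real_cond_exp M (F s)
                (\<lambda>\<omega>. sin (u * (real (Na t \<omega>) - real (Na s \<omega>)))) \<omega>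
              = Im (exp (complex_of_real (Lam (Y t \<omega>) - Lam (Y s \<omega>)) * (exp (\<i> * complex_of_real u) - 1)))))"
  using cox cond_cos cond_sin by (simp add: Lm_def)

end

theorem mainTheorem1:
  fixes M :: "'a measure"
    and N1 :: "real \<Rightarrow> 'a \<Rightarrow> nat"
    and lam :: "real \<Rightarrow> real"
    and \<alpha> :: real
    and L :: "real \<Rightarrow> 'a \<Rightarrow> real"
  assumes "prob_space M"
    and N1: "std_poisson_process M N1"
    and lam_pos: "\<forall>x\<ge>0. 0 < lam x"
    and lam_loc_int: "\<forall>t\<ge>0. set_integrable lborel {0..t} lam"
    and Lam_infty: "filterlim (cum_intensity lam) at_top at_top"
    and \<alpha>: "0 < \<alpha>" "\<alpha> < 1"
    and L: "stable_subordinator \<alpha> M L"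
    and indep: "prob_space.indep_set M
        (sets (gen_sigma M {0..} (inverse_subordinator L) borel))
        (sets (gen_sigma M {0..} N1 (count_space UNIV)))"
  shows
   "let Y = inverse_subordinator L;
        Lam = cum_intensity lam;
        N\<alpha> = (\<lambda>t \<omega>. N1 (Lam (Y t \<omega>)) \<omega>);
        F = (\<lambda>s. sigma (space M)
               (sets (gen_sigma M {0..} Y borel) \<union>
                sets (gen_sigma M {0..s} N\<alpha> (count_space UNIV))))
    in cox_process M F N\<alpha> (\<lambda>t \<omega>. Lam (Y t \<omega>)) \<and>
       (\<forall>s t u. 0 \<le> s \<longrightarrow> s \<le> t \<longrightarrow>
          (AE \<omega> in M. real_cond_exp M (F s)
                (\<lambda>\<omega>. cos (u * (real (N\<alpha> t \<omega>) - real (N\<alpha> s \<omega>)))) \<omega>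
              = Re (exp (complex_of_real (Lam (Y t \<omega>) - Lam (Y s \<omega>)) * (exp (\<i> * complex_of_real u) - 1)))) \<and>
          (AE \<omega> in M. real_cond_exp M (F s)
                (\<lambda>\<omega>. sin (u * (real (N\<alpha> t \<omega>) - real (N\<alpha> s \<omega>)))) \<omega>
              = Im (exp (complex_of_real (Lam (Y t \<omega>) - Lam (Y s \<omega>)) * (exp (\<i> * complex_of_real u) - 1)))))"
proof -
  interpret fnpp M N1 lam \<alpha> L
    by (rule fnpp.intro) (use assms in auto)
  show ?thesis using main_loc by (simp only: Let_def Na_app F_app) blast
qed


end
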